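(* Let $n>10$, $S=\{1,2,4\}\subset\mathbb Z_n$, and $\mathbb K$ a field of characteristic $0$ containing the $n$-th roots of unity. For $\lambda^n=1$: $H_0^{(\lambda)}\cong H_1^{(\lambda)}\cong\mathbb K$ if $\lambda=1$ and $H_0^{(\lambda)}=H_1^{(\lambda)}=0$ if $\lambda\ne1$, and $H_m^{(\lambda)}=0$ for all $m\ge2$. Consequently \[H_m^{\mathrm{path}}(\vec C_n^{1,2,4};\mathbb K)\cong\begin{cases}\mathbb K & m=0,1,\\ 0 & m\ge2.\end{cases}\]
   Context: GLMY path complex over a field $\mathbb K$ of characteristic $0$: elementary paths $e_{v_0\cdots v_n}$, boundary $\partial e_{v_0\cdots v_n}=\sum_{j}(-1)^j e_{v_0\cdots\widehat{v_j}\cdots v_n}$, paths with two equal consecutive vertices set to $0$; $A_n(G)$ = span of paths along arrows of $G$; $\Omega_0=A_0$, $\Omega_1=A_1$, $\Omega_n=\{u\in A_n:\partial u\in A_{n-1}\}$; $H^{\mathrm{path}}_m$ is the homology of $(\Omega_*,\partial)$. The circulant digraph $\vec{C}_n^S$ has vertex set $\mathbb Z_n$ and arrows $a\to a+s$, $s\in S$. $\tau$ is the chain automorphism induced by $a\mapsto a+1$, $\Omega_m^{(\lambda)}=\{\alpha\in\Omega_m:\tau\alpha=\lambda\alpha\}$ and $H_m^{(\lambda)}=H_m(\Omega_*^{(\lambda)},\partial)$. *)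

theory Defs
  imports Main
begin

(* Chains of the (regular) GLMY path complex on the vertex set Z_n = {0..<n}:
   a chain is a coefficient function on vertex sequences (elementary paths
   e_{v_0...v_m} correspond to lists [v_0,...,v_m]). *)

type_synonym 'k chain = "nat list \<Rightarrow> 'k"

definition regular_path :: "nat list \<Rightarrow> bool" where
  "regular_path xs \<longleftrightarrow> (\<forall>i. Suc i < length xs \<longrightarrow> xs ! i \<noteq> xs ! Suc i)"

definition vpaths :: "nat \<Rightarrow> nat \<Rightarrow> nat list set" where
  "vpaths n k = {xs. length xs = k \<and> set xs \<subseteq> {..<n}}"

definition chains :: "nat \<Rightarrow> nat \<Rightarrow> ('k::field) chain set" where
  "chains n m = {u. \<forall>xs. u xs \<noteq> 0 \<longrightarrow> xs \<in> vpaths n (Suc m) \<and> regular_path xs}"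

(* boundary: \<partial> e_{v_0..v_m} = \<Sum>_j (-1)^j e_{v_0..\<widehat>v_j..v_m}, non-regular paths set to 0;
   the boundary of a vertex (0-path) is 0 *)
definition bd :: "nat \<Rightarrow> ('k::field) chain \<Rightarrow> 'k chain" where
  "bd n u = (\<lambda>ys. if ys \<noteq> [] \<and> regular_path ys \<and> set ys \<subseteq> {..<n} then
      (\<Sum>xs\<in>vpaths n (Suc (length ys)). \<Sum>j<length xs.
          (if take j xs @ drop (Suc j) xs = ys then (-1) ^ j * u xs else 0))
    else 0)"

definition circ_arrow :: "nat \<Rightarrow> nat set \<Rightarrow> nat \<Rightarrow> nat \<Rightarrow> bool" where
  "circ_arrow n S a b \<longleftrightarrow> a < n \<and> b < n \<and> (\<exists>s\<in>S. b = (a + s) mod n)"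

definition allowed_path :: "nat \<Rightarrow> nat set \<Rightarrow> nat list \<Rightarrow> bool" where
  "allowed_path n S xs \<longleftrightarrow> (\<forall>i. Suc i < length xs \<longrightarrow> circ_arrow n S (xs ! i) (xs ! Suc i))"

definition Apaths :: "nat \<Rightarrow> nat set \<Rightarrow> nat \<Rightarrow> ('k::field) chain set" where
  "Apaths n S m = {u \<in> chains n m. \<forall>xs. u xs \<noteq> 0 \<longrightarrow> allowed_path n S xs}"

definition Omega :: "nat \<Rightarrow> nat set \<Rightarrow> nat \<Rightarrow> ('k::field) chain set" where
  "Omega n S m = (if m = 0 then Apaths n S 0
     else {u \<in> Apaths n S m. bd n u \<in> Apaths n S (m - 1)})"

(* \<tau>: chain map induced by a \<mapsto> a+1 (mod n): \<tau> e_{v_0..v_m} = e_{v_0+1..v_m+1} *)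
definition tau :: "nat \<Rightarrow> ('k::field) chain \<Rightarrow> 'k chain" where
  "tau n u = (\<lambda>ys. if set ys \<subseteq> {..<n} then u (map (\<lambda>v. (v + n - 1) mod n) ys) else 0)"

definition Omega_eig :: "nat \<Rightarrow> nat set \<Rightarrow> 'k::field \<Rightarrow> nat \<Rightarrow> 'k chain set" where
  "Omega_eig n S lam m = {a \<in> Omega n S m. tau n a = (\<lambda>xs. lam * a xs)}"

definition cycles :: "nat \<Rightarrow> (nat \<Rightarrow> ('k::field) chain set) \<Rightarrow> nat \<Rightarrow> 'k chain set" where
  "cycles n Om m = {u \<in> Om m. bd n u = (\<lambda>_. 0)}"

definition boundaries :: "nat \<Rightarrow> (nat \<Rightarrow> ('k::field) chain set) \<Rightarrow> nat \<Rightarrow> 'k chain set" where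
  "boundaries n Om m = bd n ` Om (Suc m)"

definition homology_zero :: "nat \<Rightarrow> (nat \<Rightarrow> ('k::field) chain set) \<Rightarrow> nat \<Rightarrow> bool" where
  "homology_zero n Om m \<longleftrightarrow> cycles n Om m \<subseteq> boundaries n Om m"

(* H_m \<cong> K: the quotient Z_m / B_m is one-dimensional, spanned by the class of z *)
definition homology_iso_field :: "nat \<Rightarrow> (nat \<Rightarrow> ('k::field) chain set) \<Rightarrow> nat \<Rightarrow> bool" where
  "homology_iso_field n Om m \<longleftrightarrow>
     (\<exists>z\<in>cycles n Om m. z \<notin> boundaries n Om m \<and>
        (\<forall>w\<in>cycles n Om m. \<exists>c. (\<lambda>xs. w xs - c * z xs) \<in> boundaries n Om m))"

end

theory Submission
  imports Defs
begin

type_synonym 'k coef = "int \<Rightarrow> nat \<Rightarrow> nat \<Rightarrow> nat \<Rightarrow> 'k"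

definition Dc :: "('k::field) coef \<Rightarrow> 'k coef" where
"Dc c v a b e = (if e \<le> 1 then
   c (v-1) (a+1) b e - (-1)^a * c v (a+1) b e
 + (-1)^a * c (v-2) a (b+1) e - (-1)^(a+b) * c v a (b+1) e
 + (if e = 0 then (-1)^(a+b) * (c (v-4) a b 1 - c v a b 1) else 0)
 - (if odd b then (-1)^a * c v (a+2) (b-1) e else 0)
 - (if e = 1 then (-1)^(a+b) * c v a (b+2) 0 else 0)
 else 0)"

lemma DD: "Dc (Dc c) v a b e = 0"
proof -
  consider "e = 0" | "e = 1" | "e > 1" by linarith
  then show ?thesis
  proof cases
    case 1
    then show ?thesis
      by (cases "even a"; cases "even b") (simp_all add: Dc_def algebra_simps)
  next
    case 2
    then show ?thesis
      by (cases "even a"; cases "even b") (simp_all add: Dc_def algebra_simps)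
  qed (simp add: Dc_def)
qed

definition per :: "nat \<Rightarrow> ('k::field) coef \<Rightarrow> bool" where
  "per n c \<longleftrightarrow> (\<forall>v. c v = c (v mod int n))"

definition cell :: "nat \<Rightarrow> nat \<Rightarrow> nat \<Rightarrow> nat \<Rightarrow> bool" where
  "cell m a b e \<longleftrightarrow> a + b + e = m \<and> e \<le> 1"

definition Ucell :: "nat \<Rightarrow> nat \<Rightarrow> nat \<Rightarrow> bool" where
  "Ucell a b e \<longleftrightarrow> odd b \<or> (e = 1 \<and> a \<le> 1)"

definition rk :: "nat \<Rightarrow> nat \<Rightarrow> nat \<Rightarrow> nat \<Rightarrow> nat" where
  "rk m a b e = (if e = 1 \<and> odd b then a else if e = 1 then m+1+a else m+3+a)"

definition dlt :: "nat \<times> nat \<times> nat \<Rightarrow> (int \<Rightarrow> 'k::field) \<Rightarrow> 'k coef" where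
  "dlt y g = (\<lambda>v a b e. if (a,b,e) = y then g v else 0)"

lemma Dc_add: "Dc (\<lambda>v a b e. w v a b e + d v a b e) = (\<lambda>v a b e. Dc w v a b e + Dc d v a b e)"
  by (intro ext) (simp add: Dc_def algebra_simps)

lemma per_shift: "per n w \<Longrightarrow> w (v mod int n - k) = w (v - k)"
  by (metis per_def mod_diff_left_eq)

lemma per_Dc: "per n w \<Longrightarrow> per n (Dc w)"
  unfolding per_def
proof (intro allI ext)
  fix v a b e assume p: "\<forall>v. w v = w (v mod int n)"
  hence pw: "per n w" by (simp add: per_def)
  have q: "w (v mod int n) = w v" using p by metis
  show "Dc w v a b e = Dc w (v mod int n) a b e"
    unfolding Dc_def using per_shift[OF pw, of v] q by simp
qed

lemma per_dlt: "(\<forall>v. g v = g (v mod int n)) \<Longrightarrow> per n (dlt y g)"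
  unfolding per_def dlt_def by (auto intro!: ext)

lemma Dc_dlt_nz:
  assumes "Dc (dlt y g) v a b e \<noteq> 0"
  shows "y = (a+1,b,e) \<or> y = (a,b+1,e) \<or> (e = 0 \<and> y = (a,b,1)) \<or> (odd b \<and> y = (a+2,b-1,e))
     \<or> (e = 1 \<and> y = (a,b+2,0))"
  using assms unfolding Dc_def dlt_def by (auto split: if_splits)

definition Mt :: "nat \<Rightarrow> nat \<Rightarrow> nat \<Rightarrow> nat \<times> nat \<times> nat" where
  "Mt a b e = (if odd b then (a+2, b-1, e) else (a, b+2, 0))"

definition sgM :: "nat \<Rightarrow> nat \<Rightarrow> nat \<Rightarrow> 'k::field" where
  "sgM a b e = (if odd b then (-1)^a else (-1)^(a+b))"

lemma Dc_dlt_M: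
  assumes "cell m a b e" "Ucell a b e"
  shows "Dc (dlt (Mt a b e) g) v a b e = - sgM a b e * g v"
  using assms unfolding Dc_def dlt_def Mt_def sgM_def cell_def Ucell_def
  by auto

lemma Dc_dlt_other:
  assumes "cell m a b e" "Ucell a b e" "cell m a' b' e'" "Ucell a' b' e'"
    "rk m a' b' e' \<le> rk m a b e" "(a',b',e') \<noteq> (a,b,e)"
  shows "Dc (dlt (Mt a b e) g) v a' b' e' = 0"
proof (rule ccontr)
  assume "Dc (dlt (Mt a b e) g) v a' b' e' \<noteq> 0"
  from Dc_dlt_nz[OF this] assms show False
    unfolding Mt_def cell_def Ucell_def rk_def
    apply (auto split: if_splits)
    by presburger
qed

lemma rk_inj:
  assumes "cell m a b e" "Ucell a b e" "cell m a' b' e'" "Ucell a' b' e'"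
    "rk m a' b' e' = rk m a b e"
  shows "(a',b',e') = (a,b,e)"
  using assms unfolding cell_def Ucell_def rk_def by (auto split: if_splits)

lemma lemR_aux:
  assumes "per n c"
  shows "\<exists>w. per n w \<and> (\<forall>v a b e. cell m a b e \<longrightarrow> Ucell a b e \<longrightarrow> rk m a b e < k \<longrightarrow>
            c v a b e = Dc w v a b e)"
proof (induction k)
  case 0
  show ?case by (rule exI[of _ "\<lambda>v a b e. 0"]) (simp add: per_def)
next
  case (Suc k)
  then obtain w where pw: "per n w" and
    hw: "\<forall>v a b e. cell m a b e \<longrightarrow> Ucell a b e \<longrightarrow> rk m a b e < k \<longrightarrow> c v a b e = Dc w v a b e"
    by blast
  show ?case
  proof (cases "\<exists>a b e. cell m a b e \<and> Ucell a b e \<and> rk m a b e = k")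
    case False
    then show ?thesis using pw hw by (metis less_SucE)
  next
    case True
    then obtain a0 b0 e0 where x0: "cell m a0 b0 e0" "Ucell a0 b0 e0" "rk m a0 b0 e0 = k" by blast
    define g where "g = (\<lambda>v. - sgM a0 b0 e0 * (c v a0 b0 e0 - Dc w v a0 b0 e0))"
    define w' where "w' = (\<lambda>v a b e. w v a b e + dlt (Mt a0 b0 e0) g v a b e)"
    have pg: "\<forall>v. g v = g (v mod int n)"
      using assms per_Dc[OF pw] unfolding g_def per_def by metis
    have pw': "per n w'"
      using pw per_dlt[OF pg, of "Mt a0 b0 e0"] unfolding per_def w'_def by metis
    have sq: "sgM a0 b0 e0 * sgM a0 b0 e0 = (1::'a)"
      unfolding sgM_def by (simp add: power_mult_distrib[symmetric])
    have "c v a b e = Dc w' v a b e"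
      if "cell m a b e" "Ucell a b e" "rk m a b e < Suc k" for v a b e
    proof (cases "rk m a b e = k")
      case True
      hence "(a,b,e) = (a0,b0,e0)" using rk_inj[OF x0(1,2) that(1,2)] x0(3) by simp
      hence eq: "a = a0" "b = b0" "e = e0" by auto
      have "Dc (dlt (Mt a0 b0 e0) g) v a0 b0 e0 = - sgM a0 b0 e0 * g v"
        using Dc_dlt_M[OF x0(1,2)] by simp
      also have "\<dots> = (sgM a0 b0 e0 * sgM a0 b0 e0) * (c v a0 b0 e0 - Dc w v a0 b0 e0)"
        unfolding g_def by (simp add: algebra_simps)
      finally have "Dc (dlt (Mt a0 b0 e0) g) v a0 b0 e0 = c v a0 b0 e0 - Dc w v a0 b0 e0"
        using sq by simp
      then show ?thesis unfolding w'_def Dc_add eq by simp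
    next
      case False
      hence lt: "rk m a b e < k" using that by simp
      have ne: "(a,b,e) \<noteq> (a0,b0,e0)" using lt x0(3) by auto
      show ?thesis unfolding w'_def Dc_add
        using Dc_dlt_other[OF x0(1,2) that(1,2) _ ne] lt x0(3) hw that by simp
    qed
    then show ?thesis using pw' by blast
  qed
qed

lemma lemR:
  assumes "per n c"
  shows "\<exists>w. per n w \<and> (\<forall>v a b e. cell m a b e \<longrightarrow> Ucell a b e \<longrightarrow> c v a b e = Dc w v a b e)"
proof -
  obtain w where "per n w" "\<forall>v a b e. cell m a b e \<longrightarrow> Ucell a b e \<longrightarrow> rk m a b e < 2*m+5 \<longrightarrow>
            c v a b e = Dc w v a b e" using lemR_aux[OF assms] by blast
  moreover have "rk m a b e < 2*m+5" if "cell m a b e" for a b e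
    using that unfolding rk_def cell_def by auto
  ultimately show ?thesis by blast
qed

lemma lemC:
  assumes m2: "m \<ge> 2"
    and U0: "\<And>v a b e. cell m a b e \<Longrightarrow> Ucell a b e \<Longrightarrow> c v a b e = 0"
    and cyc: "\<And>v a b e. cell (m-1) a b e \<Longrightarrow> Dc c v a b e = (0::'k::field)"
  shows "cell m a b e \<Longrightarrow> c v a b e = 0"
proof -
  have C1: "\<forall>v. c v a (m-1-a) 1 = 0" if "a \<le> m - 1" for a
    using that
  proof (induction a rule: less_induct)
    case (less a)
    show ?case
    proof
      fix v
      define b where "b = m - 1 - a"
      have cl: "cell m a b 1" using less.prems m2 unfolding cell_def b_def by auto
      show "c v a (m-1-a) 1 = 0"
      proof (cases "odd b \<or> a \<le> 1")
        case True
        then show ?thesis using U0[OF cl] unfolding Ucell_def b_def by auto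
      next
        case False
        hence ev: "even b" and a2: "a \<ge> 2" by auto
        obtain k where ak: "a = k + 2" using a2 by (metis add.commute le_Suc_ex)
        have "Dc c v k (b+1) 1 = 0" using cyc less.prems m2 ak unfolding cell_def b_def by auto
        moreover have "c w (k+1) (b+1) 1 = 0" for w
        proof -
          have "cell m (k+1) (b+1) 1" using ak less.prems unfolding cell_def b_def by arith
          moreover have "Ucell (k+1) (b+1) 1" using ev unfolding Ucell_def by simp
          ultimately show ?thesis using U0 by blast
        qed
        moreover have "c w k (b+3) 0 = 0" for w
        proof -
          have "cell m k (b+3) 0" using ak less.prems unfolding cell_def b_def by arith
          moreover have "Ucell k (b+3) 0" using ev unfolding Ucell_def by simp
          ultimately show ?thesis using U0 by blast
        qed
        moreover have "c w k (b+2) 1 = 0" for w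
        proof -
          have "m - 1 - k = b+2" using ak less.prems unfolding b_def by arith
          then show ?thesis using less.IH[of "k"] ak less.prems by auto
        qed
        ultimately have "(-1)^k * c v (k+2) b 1 = (0::'k)"
          using ev unfolding Dc_def by (simp add: numeral_3_eq_3)
        then show ?thesis using ak unfolding b_def by simp
      qed
    qed
  qed
  have C2: "\<forall>v. c v a (m-a) 0 = 0" if "a \<le> m" for a
    using that
  proof (induction a rule: less_induct)
    case (less a)
    show ?case
    proof
      fix v
      define b where "b = m - a"
      have cl: "cell m a b 0" using less.prems m2 unfolding cell_def b_def by auto
      show "c v a (m-a) 0 = 0"
      proof (cases "odd b")
        case True
        then show ?thesis using U0[OF cl] unfolding Ucell_def b_def by auto
      next
        case False
        hence ev: "even b" by auto
        show ?thesis
        proof (cases "a \<le> 1")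
          case True
          hence b2: "b \<ge> 2" using ev m2 unfolding b_def by presburger
          obtain j where bj: "b = j + 2" using b2 by (metis add.commute le_Suc_ex)
          have "Dc c v a j 1 = 0" using cyc bj True m2 unfolding cell_def b_def by auto
          moreover have "c w (a+1) j 1 = 0" for w
          proof -
            have "m - 1 - (a+1) = j" "a + 1 \<le> m - 1" using bj True unfolding b_def by arith+
            then show ?thesis using C1[of "a+1"] by auto
          qed
          moreover have "c w a (j+1) 1 = 0" for w
          proof -
            have "m - 1 - a = j+1" "a \<le> m - 1" using bj True unfolding b_def by arith+
            then show ?thesis using C1[of a] by auto
          qed
          ultimately have "(-1)^(a+j) * c v a (j+2) 0 = (0::'k)"
            using ev bj unfolding Dc_def by simp
          then show ?thesis using bj unfolding b_def by simp
        next
          case False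
          hence a2: "a \<ge> 2" by simp
          obtain k where ak: "a = k + 2" using a2 by (metis add.commute le_Suc_ex)
          have "Dc c v k (b+1) 0 = 0" using cyc less.prems m2 ak unfolding cell_def b_def by auto
          moreover have "c w (k+1) (b+1) 0 = 0" for w
          proof -
            have "cell m (k+1) (b+1) 0" using ak less.prems unfolding cell_def b_def by arith
            moreover have "Ucell (k+1) (b+1) 0" using ev unfolding Ucell_def by simp
            ultimately show ?thesis using U0 by blast
          qed
          moreover have "c w k (b+2) 0 = 0" for w
          proof -
            have "m - k = b+2" using ak less.prems unfolding b_def by arith
            then show ?thesis using less.IH[of "k"] ak less.prems by auto
          qed
          moreover have "c w k (b+1) 1 = 0" for w
          proof -
            have "m - 1 - k = b+1" "k \<le> m - 1" using ak less.prems unfolding b_def by arith+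
            then show ?thesis using C1[of "k"] by auto
          qed
          ultimately have "(-1)^k * c v (k+2) b 0 = (0::'k)"
            using ev unfolding Dc_def by simp
          then show ?thesis using ak unfolding b_def by simp
        qed
      qed
    qed
  qed
  assume "cell m a b e"
  then show "c v a b e = 0"
  proof (cases "e = 0")
    case True
    then show ?thesis using C2[of a] \<open>cell m a b e\<close> unfolding cell_def by auto
  next
    case False
    hence "e = 1" using \<open>cell m a b e\<close> unfolding cell_def by auto
    moreover have "m - 1 - a = b" "a \<le> m - 1" using \<open>cell m a b e\<close> \<open>e = 1\<close> unfolding cell_def by auto
    ultimately show ?thesis using C1[of a] by auto
  qed
qed

abbreviation S0 :: "nat set" where "S0 \<equiv> {1,2,4}"

fun pth :: "nat \<Rightarrow> nat \<Rightarrow> nat list \<Rightarrow> nat list" where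
  "pth n v [] = [v]"
| "pth n v (s#\<sigma>) = v # pth n ((v+s) mod n) \<sigma>"

fun endp :: "nat \<Rightarrow> nat \<Rightarrow> nat list \<Rightarrow> nat" where
  "endp n v [] = v"
| "endp n v (s#\<sigma>) = endp n ((v+s) mod n) \<sigma>"

fun stp :: "nat \<Rightarrow> nat list \<Rightarrow> nat list" where
  "stp n (x#y#r) = ((y + n - x) mod n) # stp n (y#r)"
| "stp n _ = []"

lemma length_pth[simp]: "length (pth n v \<sigma>) = Suc (length \<sigma>)"
  by (induction \<sigma> arbitrary: v) auto

lemma hd_pth[simp]: "hd (pth n v \<sigma>) = v"
  by (cases \<sigma>) auto

lemma pth_ne[simp]: "pth n v \<sigma> \<noteq> []"
  by (cases \<sigma>) auto

lemma pth_append: "pth n v (\<alpha> @ \<beta>) = butlast (pth n v \<alpha>) @ pth n (endp n v \<alpha>) \<beta>"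
  by (induction \<alpha> arbitrary: v) auto

lemma last_pth[simp]: "last (pth n v \<sigma>) = endp n v \<sigma>"
  by (induction \<sigma> arbitrary: v) auto

lemma pth_snoc: "pth n v (\<sigma> @ [s]) = pth n v \<sigma> @ [(endp n v \<sigma> + s) mod n]"
proof -
  have "pth n v (\<sigma> @ [s]) = butlast (pth n v \<sigma>) @ pth n (endp n v \<sigma>) [s]" by (rule pth_append)
  also have "\<dots> = butlast (pth n v \<sigma>) @ [last (pth n v \<sigma>)] @ [(endp n v \<sigma> + s) mod n]" by simp
  also have "\<dots> = pth n v \<sigma> @ [(endp n v \<sigma> + s) mod n]"
    by (metis append_assoc append_butlast_last_id pth_ne)
  finally show ?thesis .
qed

lemma set_pth: "v < n \<Longrightarrow> set (pth n v \<sigma>) \<subseteq> {..<n}"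
  by (induction \<sigma> arbitrary: v) auto

lemma endp_lt: "v < n \<Longrightarrow> endp n v \<sigma> < n"
  by (induction \<sigma> arbitrary: v) auto

lemma mod_step_back: "v < n \<Longrightarrow> w < n \<Longrightarrow> (v + (w + n - v) mod n) mod n = (w::nat)"
proof -
  assume a: "v < n" "w < n"
  have "(v + (w + n - v) mod n) mod n = (v + (w + n - v)) mod n" by (simp add: mod_add_right_eq)
  also have "v + (w + n - v) = w + n" using a by simp
  finally show ?thesis using a by simp
qed

lemma mod_step_fwd: "v < n \<Longrightarrow> s < n \<Longrightarrow> ((v + s) mod n + n - v) mod n = (s::nat)"
proof -
  assume a: "v < n" "s < n"
  have n0: "n > 0" using a by simp
  have "int (((v + s) mod n + n - v) mod n) = ((int v + int s) mod int n + int n - int v) mod int n"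
    using a by (simp add: zmod_int of_nat_diff)
  also have "\<dots> = ((int v + int s) mod int n + (int n - int v)) mod int n" by (simp add: algebra_simps)
  also have "\<dots> = (int v + int s + (int n - int v)) mod int n" by (rule mod_add_left_eq)
  also have "\<dots> = int s" using a by simp
  finally show ?thesis by simp
qed

lemma pth_stp: "xs \<noteq> [] \<Longrightarrow> set xs \<subseteq> {..<n} \<Longrightarrow> xs = pth n (hd xs) (stp n xs)"
proof (induction n xs rule: stp.induct)
  case (1 n x y r)
  then have "y # r = pth n y (stp n (y#r))" by auto
  moreover have "(x + (y + n - x) mod n) mod n = y" using 1(3) by (intro mod_step_back) auto
  ultimately show ?case by simp
qed auto

lemma stp_pth: "v < n \<Longrightarrow> \<forall>s\<in>set \<sigma>. s < n \<Longrightarrow> stp n (pth n v \<sigma>) = \<sigma>"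
proof (induction \<sigma> arbitrary: v)
  case Nil then show ?case by simp
next
  case (Cons s \<sigma>)
  have n0: "n > 0" using Cons by simp
  have "stp n (pth n ((v+s) mod n) \<sigma>) = \<sigma>" using Cons n0 by simp
  then show ?case using Cons mod_step_fwd[of v n s] by (cases \<sigma>) auto
qed

lemma set_stp_lt: "n > 0 \<Longrightarrow> \<forall>s\<in>set (stp n xs). s < n"
  by (induction n xs rule: stp.induct) auto

lemma length_stp: "length (stp n xs) = length xs - 1"
  by (induction n xs rule: stp.induct) auto

lemma adj_Cons2: "(\<forall>i. Suc i < length (x#y#r) \<longrightarrow> P ((x#y#r) ! i) ((x#y#r) ! Suc i))
     \<longleftrightarrow> P x y \<and> (\<forall>i. Suc i < length (y#r) \<longrightarrow> P ((y#r) ! i) ((y#r) ! Suc i))"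
proof (intro iffI conjI allI impI)
  assume h: "\<forall>i. Suc i < length (x#y#r) \<longrightarrow> P ((x#y#r) ! i) ((x#y#r) ! Suc i)"
  then show "P x y" using h[rule_format, of 0] by simp
  fix i assume "Suc i < length (y#r)"
  then show "P ((y#r) ! i) ((y#r) ! Suc i)" using h[rule_format, of "Suc i"] by simp
next
  fix i assume a: "P x y \<and> (\<forall>i. Suc i < length (y#r) \<longrightarrow> P ((y#r) ! i) ((y#r) ! Suc i))"
    "Suc i < length (x#y#r)"
  show "P ((x#y#r) ! i) ((x#y#r) ! Suc i)"
  proof (cases i)
    case 0 then show ?thesis using a by simp
  next
    case (Suc j) then show ?thesis using a(1) a(2) by auto
  qed
qed

lemma allowed_Nil[simp]: "allowed_path n S []" and allowed_single[simp]: "allowed_path n S [x]"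
  by (auto simp: allowed_path_def)

lemma allowed_Cons2: "allowed_path n S (x#y#r) \<longleftrightarrow> circ_arrow n S x y \<and> allowed_path n S (y#r)"
  unfolding allowed_path_def by (rule adj_Cons2)

lemma regular_Nil[simp]: "regular_path []" and regular_single[simp]: "regular_path [x]"
  by (auto simp: regular_path_def)

lemma regular_Cons2: "regular_path (x#y#r) \<longleftrightarrow> x \<noteq> y \<and> regular_path (y#r)"
  unfolding regular_path_def by (rule adj_Cons2)

lemma dvd_small_int: "\<bar>d\<bar> < int n \<Longrightarrow> int n dvd (d::int) \<Longrightarrow> d = 0"
  using dvd_abs_iff zdvd_not_zless zero_less_abs_iff by blast

lemma mod_add_inj: "x < n \<Longrightarrow> y < n \<Longrightarrow> (v + x) mod n = (v + y) mod n \<Longrightarrow> x = (y::nat)"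
proof -
  assume a: "x < n" "y < n" "(v + x) mod n = (v + y) mod n"
  have "(int v + int x) mod int n = (int v + int y) mod int n"
    using a(3) by (metis of_nat_add zmod_int)
  then have "int n dvd (int v + int x) - (int v + int y)" by (simp add: mod_eq_dvd_iff)
  then have d: "int n dvd int x - int y" by simp
  have "\<bar>int x - int y\<bar> < int n" using a(1,2) by linarith
  then have "int x - int y = 0" using d dvd_small_int by blast
  then show "x = y" by simp
qed

lemma allowed_pth:
  assumes "v < n" "\<forall>s\<in>set \<sigma>. s < n" "4 < n"
  shows "allowed_path n S0 (pth n v \<sigma>) \<longleftrightarrow> set \<sigma> \<subseteq> S0"
  using assms
proof (induction \<sigma> arbitrary: v)
  case Nil then show ?case by simp
next
  case (Cons s \<sigma>)
  have ih: "allowed_path n S0 (pth n ((v+s) mod n) \<sigma>) \<longleftrightarrow> set \<sigma> \<subseteq> S0"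
    using Cons by simp
  have ca: "circ_arrow n S0 v ((v+s) mod n) \<longleftrightarrow> s \<in> S0"
  proof
    assume "circ_arrow n S0 v ((v+s) mod n)"
    then obtain t where "t \<in> S0" "(v+s) mod n = (v+t) mod n" unfolding circ_arrow_def by blast
    then show "s \<in> S0" using mod_add_inj[of s n t v] Cons.prems by auto
  next
    assume "s \<in> S0" then show "circ_arrow n S0 v ((v+s) mod n)"
      unfolding circ_arrow_def using Cons.prems by auto
  qed
  have e: "allowed_path n S0 (pth n v (s#\<sigma>)) \<longleftrightarrow> circ_arrow n S0 v ((v+s) mod n) \<and> allowed_path n S0 (pth n ((v+s) mod n) \<sigma>)"
    by (cases \<sigma>) (auto simp: allowed_Cons2)
  show ?case using e ca ih by auto
qed

lemma regular_pth:
  assumes "v < n" "\<forall>s\<in>set \<sigma>. 0 < s \<and> s < n"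
  shows "regular_path (pth n v \<sigma>)"
  using assms
proof (induction \<sigma> arbitrary: v)
  case Nil then show ?case by simp
next
  case (Cons s \<sigma>)
  have "v \<noteq> (v+s) mod n" using Cons.prems mod_add_inj[of 0 n s v] by auto
  moreover have "regular_path (pth n ((v+s) mod n) \<sigma>)" using Cons by simp
  ultimately show ?case by (cases \<sigma>) (simp_all add: regular_Cons2)
qed

lemma allowed_decomp:
  assumes "xs \<noteq> []" "set xs \<subseteq> {..<n}" "allowed_path n S0 xs" "4 < n"
  shows "xs = pth n (hd xs) (stp n xs) \<and> set (stp n xs) \<subseteq> S0 \<and> hd xs < n"
proof -
  have e: "xs = pth n (hd xs) (stp n xs)" using pth_stp assms by blast
  have h: "hd xs < n" using assms by (cases xs) auto
  have "set (stp n xs) \<subseteq> S0"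
    using allowed_pth[OF h set_stp_lt[of n xs]] assms e by auto
  then show ?thesis using e h by auto
qed

definition cs :: "nat \<Rightarrow> nat \<Rightarrow> nat \<Rightarrow> nat list" where
  "cs a b e = replicate a 1 @ replicate b 2 @ replicate e 4"

fun ninv :: "nat list \<Rightarrow> nat" where
  "ninv [] = 0"
| "ninv (x#xs) = length (filter (\<lambda>y. y < x) xs) + ninv xs"

lemma ninv_swap: "t < s \<Longrightarrow> ninv (\<alpha> @ [s,t] @ \<beta>) = Suc (ninv (\<alpha> @ [t,s] @ \<beta>))"
  by (induction \<alpha>) auto

lemma sign_swap: "s \<noteq> t \<Longrightarrow> (-1::'k::field)^ninv (\<alpha> @ [s,t] @ \<beta>) = - ((-1)^ninv (\<alpha> @ [t,s] @ \<beta>))"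
proof (cases "t < s")
  case True then show ?thesis using ninv_swap[of t s \<alpha> \<beta>] by simp
next
  case False
  assume "s \<noteq> t"
  hence "s < t" using False by simp
  then show ?thesis using ninv_swap[of s t \<alpha> \<beta>] by simp
qed

lemma count_swap: "count_list (\<alpha> @ [s,t] @ \<beta>) x = count_list (\<alpha> @ [t,s] @ \<beta>) x"
  by simp

lemma length_cs[simp]: "length (cs a b e) = a + b + e"
  by (simp add: cs_def)

lemma count_rep_same: "count_list (replicate k x) x = k"
  by (induction k) auto

lemma count_rep_other: "x \<noteq> y \<Longrightarrow> count_list (replicate k x) y = 0"
  by (induction k) auto

lemma rep_ss: "replicate k x @ [x,x] = x # x # replicate k x"
  by (induction k) auto

lemma count_cs1[simp]: "count_list (cs a b e) 1 = a"
  and count_cs2[simp]: "count_list (cs a b e) 2 = b"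
  and count_cs4[simp]: "count_list (cs a b e) 4 = e"
  by (simp_all add: cs_def count_list_append count_rep_same count_rep_other)

lemma set_cs: "set (cs a b e) \<subseteq> S0"
  by (auto simp: cs_def)

lemma ninv0_ge: "ninv (y#ys) = 0 \<Longrightarrow> z \<in> set ys \<Longrightarrow> y \<le> z"
  by (auto simp: filter_empty_conv)

lemma ninv0_sorted:
  "set \<sigma> \<subseteq> S0 \<Longrightarrow> ninv \<sigma> = 0 \<Longrightarrow> \<sigma> = cs (count_list \<sigma> 1) (count_list \<sigma> 2) (count_list \<sigma> 4)"
proof (induction \<sigma>)
  case Nil then show ?case by (simp add: cs_def)
next
  case (Cons x xs)
  have ih: "xs = cs (count_list xs 1) (count_list xs 2) (count_list xs 4)"
    using Cons by simp
  have ge: "\<forall>z\<in>set xs. x \<le> z" using Cons.prems(2) by (auto simp: filter_empty_conv)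
  consider "x = 1" | "x = 2" | "x = 4" using Cons.prems(1) by auto
  then show ?case
  proof cases
    case 1 then show ?thesis using ih by (simp add: cs_def)
  next
    case 2
    hence "count_list xs 1 = 0" using ge by (auto simp: count_list_0_iff)
    then show ?thesis using ih 2 by (simp add: cs_def)
  next
    case 3
    hence "count_list xs 1 = 0" "count_list xs 2 = 0" using ge by (auto simp: count_list_0_iff)
    then show ?thesis using ih 3 by (simp add: cs_def)
  qed
qed

lemma descent: "ninv \<sigma> > 0 \<Longrightarrow> \<exists>\<alpha> \<beta> s t. \<sigma> = \<alpha> @ [s,t] @ \<beta> \<and> t < s"
proof (induction \<sigma>)
  case Nil then show ?case by simp
next
  case (Cons x xs)
  show ?case
  proof (cases "ninv xs > 0")
    case True
    then obtain \<alpha> \<beta> s t where "xs = \<alpha> @ [s,t] @ \<beta>" "t < s" using Cons.IH by blast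
    then show ?thesis by (metis append_Cons)
  next
    case False
    hence i0: "ninv xs = 0" by simp
    then have "filter (\<lambda>y. y < x) xs \<noteq> []" using Cons.prems by simp
    then obtain z where z: "z \<in> set xs" "z < x" by (auto simp: filter_empty_conv)
    then obtain y ys where xs: "xs = y # ys" by (cases xs) auto
    have "y \<le> z" using z xs ninv0_ge[of y ys z] i0 by auto
    hence "y < x" using z by simp
    then show ?thesis using xs
      by (intro exI[of _ "[]"] exI[of _ ys] exI[of _ x] exI[of _ y]) simp
  qed
qed

lemma sort_sign:
  fixes f :: "nat list \<Rightarrow> 'k::field"
  assumes swap: "\<And>\<alpha> \<beta> s t. s\<in>S0 \<Longrightarrow> t\<in>S0 \<Longrightarrow> s\<noteq>t \<Longrightarrow> set \<alpha> \<subseteq> S0 \<Longrightarrow> set \<beta> \<subseteq> S0 \<Longrightarrow>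
        length \<alpha> + length \<beta> + 2 = L \<Longrightarrow> f (\<alpha>@[s,t]@\<beta>) = - f (\<alpha>@[t,s]@\<beta>)"
  shows "set \<sigma> \<subseteq> S0 \<Longrightarrow> length \<sigma> = L \<Longrightarrow>
     f \<sigma> = (-1)^ninv \<sigma> * f (cs (count_list \<sigma> 1) (count_list \<sigma> 2) (count_list \<sigma> 4))"
proof (induction "ninv \<sigma>" arbitrary: \<sigma> rule: less_induct)
  case less
  show ?case
  proof (cases "ninv \<sigma> = 0")
    case True
    then show ?thesis using ninv0_sorted[OF less.prems(1)] by simp
  next
    case False
    then obtain \<alpha> \<beta> s t where sg: "\<sigma> = \<alpha> @ [s,t] @ \<beta>" "t < s" using descent by blast
    define \<sigma>' where "\<sigma>' = \<alpha> @ [t,s] @ \<beta>"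
    have n': "ninv \<sigma> = Suc (ninv \<sigma>')" using ninv_swap[OF sg(2)] sg unfolding \<sigma>'_def by simp
    have set': "set \<sigma>' \<subseteq> S0" "length \<sigma>' = L" using less.prems sg unfolding \<sigma>'_def by auto
    have cnt: "count_list \<sigma>' x = count_list \<sigma> x" for x using sg unfolding \<sigma>'_def by simp
    have "f \<sigma> = - f \<sigma>'"
      using swap[of s t \<alpha> \<beta>] less.prems sg unfolding \<sigma>'_def by auto
    also have "f \<sigma>' = (-1)^ninv \<sigma>' * f (cs (count_list \<sigma> 1) (count_list \<sigma> 2) (count_list \<sigma> 4))"
      using less.hyps[of \<sigma>'] n' set' cnt by simp
    finally show ?thesis using n' by simp
  qed
qed

lemma cs_44: "e \<ge> 2 \<Longrightarrow> cs a b e = (replicate a 1 @ replicate b 2 @ replicate (e-2) 4) @ [4,4] @ []"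
proof -
  assume "e \<ge> 2"
  then obtain k where "e = k + 2" by (metis add.commute le_Suc_ex)
  then show ?thesis by (simp add: cs_def rep_ss)
qed

lemma finite_vpaths: "finite (vpaths n k)"
proof -
  have "vpaths n k = {xs. set xs \<subseteq> {..<n} \<and> length xs = k}" unfolding vpaths_def by auto
  then show ?thesis using finite_lists_length_eq[of "{..<n}" k] by simp
qed

lemma del_ins: "j \<le> length ys \<Longrightarrow> take j (take j ys @ w # drop j ys) @ drop (Suc j) (take j ys @ w # drop j ys) = ys"
  by simp

lemma ins_del: "j < length xs \<Longrightarrow> take j xs @ drop (Suc j) xs = ys \<Longrightarrow> xs = take j ys @ (xs!j) # drop j ys"
proof -
  assume a: "j < length xs" "take j xs @ drop (Suc j) xs = ys"
  have "take j ys = take j xs" using a by auto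
  moreover have "drop j ys = drop (Suc j) xs" using a by auto
  ultimately show ?thesis using a(1) by (simp add: id_take_nth_drop[symmetric])
qed

lemma bd_fiber:
  assumes "j \<le> length ys" "set ys \<subseteq> {..<n}"
  shows "{xs \<in> vpaths n (Suc (length ys)). take j xs @ drop (Suc j) xs = ys} = (\<lambda>w. take j ys @ w # drop j ys) ` {..<n}"
proof (intro equalityI subsetI)
  fix xs assume "xs \<in> {xs \<in> vpaths n (Suc (length ys)). take j xs @ drop (Suc j) xs = ys}"
  then have xs: "length xs = Suc (length ys)" "set xs \<subseteq> {..<n}" "take j xs @ drop (Suc j) xs = ys"
    unfolding vpaths_def by auto
  have jl: "j < length xs" using xs(1) assms(1) by simp
  have "xs = take j ys @ (xs!j) # drop j ys" using ins_del[OF jl xs(3)] .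
  moreover have "xs!j < n" using xs(2) jl nth_mem by blast
  ultimately show "xs \<in> (\<lambda>w. take j ys @ w # drop j ys) ` {..<n}" by blast
next
  fix xs assume "xs \<in> (\<lambda>w. take j ys @ w # drop j ys) ` {..<n}"
  then obtain w where w: "w < n" "xs = take j ys @ w # drop j ys" by auto
  have "set xs \<subseteq> {..<n}" using w assms(2) by (auto dest: in_set_takeD in_set_dropD)
  moreover have "length xs = Suc (length ys)" using w assms(1) by simp
  moreover have "take j xs @ drop (Suc j) xs = ys" using w assms(1) by simp
  ultimately show "xs \<in> {xs \<in> vpaths n (Suc (length ys)). take j xs @ drop (Suc j) xs = ys}"
    unfolding vpaths_def by auto
qed

lemma ins_inj: "j \<le> length ys \<Longrightarrow> inj_on (\<lambda>w. take j ys @ w # drop j ys) A"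
proof (rule inj_onI)
  fix w w' assume "j \<le> length ys" "take j ys @ w # drop j ys = take j ys @ w' # drop j ys"
  then show "w = w'" by simp
qed

lemma bd_ins:
  assumes "ys \<noteq> []" "regular_path ys" "set ys \<subseteq> {..<n}"
  shows "bd n u ys = (\<Sum>j\<le>length ys. (-1)^j * (\<Sum>w<n. u (take j ys @ w # drop j ys)))"
proof -
  let ?V = "vpaths n (Suc (length ys))"
  let ?f = "\<lambda>xs j. if take j xs @ drop (Suc j) xs = ys then (-1)^j * u xs else 0"
  have "bd n u ys = (\<Sum>xs\<in>?V. \<Sum>j<length xs. ?f xs j)"
    using assms unfolding bd_def by simp
  also have "\<dots> = (\<Sum>xs\<in>?V. \<Sum>j<Suc (length ys). ?f xs j)"
    by (rule sum.cong) (auto simp: vpaths_def)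
  also have "\<dots> = (\<Sum>j<Suc (length ys). \<Sum>xs\<in>?V. ?f xs j)"
    by (rule sum.swap)
  also have "\<dots> = (\<Sum>j\<le>length ys. (-1)^j * (\<Sum>w<n. u (take j ys @ w # drop j ys)))"
    unfolding lessThan_Suc_atMost
  proof (rule sum.cong[OF refl])
    fix j assume "j \<in> {..length ys}"
    hence j: "j \<le> length ys" by simp
    have "(\<Sum>xs\<in>?V. ?f xs j) = (\<Sum>xs\<in>{xs \<in> ?V. take j xs @ drop (Suc j) xs = ys}. (-1)^j * u xs)"
      by (simp add: sum.inter_filter[OF finite_vpaths])
    also have "\<dots> = (\<Sum>xs\<in>(\<lambda>w. take j ys @ w # drop j ys) ` {..<n}. (-1)^j * u xs)"
      using bd_fiber[OF j assms(3)] by simp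
    also have "\<dots> = (\<Sum>w<n. (-1)^j * u (take j ys @ w # drop j ys))"
      by (subst sum.reindex[OF ins_inj[OF j]]) simp
    finally show "(\<Sum>xs\<in>?V. ?f xs j) = (-1)^j * (\<Sum>w<n. u (take j ys @ w # drop j ys))"
      by (simp add: sum_distrib_left)
  qed
  finally show ?thesis .
qed

lemma sum_sparse:
  assumes "finite A" "inj_on g A" "g ` A \<subseteq> B" "finite B" "\<And>w. w \<in> B \<Longrightarrow> F w \<noteq> 0 \<Longrightarrow> w \<in> g ` A"
  shows "sum F B = sum (F \<circ> g) A"
proof -
  have z: "\<forall>i\<in>B - g ` A. F i = 0" using assms(5) by blast
  have "sum F (g ` A) = sum F B"
    by (rule sum.mono_neutral_left[OF assms(4) assms(3) z])
  then have "sum F B = sum F (g ` A)" by simp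
  also have "\<dots> = sum (F \<circ> g) A" using assms(2) by (rule sum.reindex)
  finally show ?thesis .
qed

lemma allowed_mid: "allowed_path n S (xs @ x # y # zs) \<Longrightarrow> circ_arrow n S x y"
  unfolding allowed_path_def
  by (drule spec[of _ "length xs"]) (simp add: nth_append)

lemma arrowE: "circ_arrow n S0 x y \<Longrightarrow> \<exists>s\<in>S0. y = (x+s) mod n"
  unfolding circ_arrow_def by blast

lemma mod_back: "w < n \<Longrightarrow> s \<le> n \<Longrightarrow> ((w + s) mod n + n - s) mod n = (w::nat)"
proof -
  assume a: "w < n" "s \<le> n"
  have "(w + s) mod n + n - s = (w + s) mod n + (n - s)" using a by simp
  then have "((w + s) mod n + n - s) mod n = ((w + s) mod n + (n - s)) mod n" by simp
  also have "\<dots> = (w + s + (n - s)) mod n" by (rule mod_add_left_eq)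
  also have "w + s + (n - s) = w + n" using a by simp
  finally show ?thesis using a by simp
qed

lemma mod_fwd: "v < n \<Longrightarrow> s \<le> n \<Longrightarrow> ((v + n - s) mod n + s) mod n = (v::nat)"
proof -
  assume a: "v < n" "s \<le> n"
  have "((v + n - s) mod n + s) mod n = ((v + n - s) + s) mod n" by (simp add: mod_add_left_eq)
  also have "(v + n - s) + s = v + n" using a by simp
  finally show ?thesis using a by simp
qed

lemma inj_sub: "4 < n \<Longrightarrow> inj_on (\<lambda>s. (v + n - s) mod n) S0"
proof (rule inj_onI)
  fix s t assume a: "4 < n" "s \<in> S0" "t \<in> S0" "(v + n - s) mod n = (v + n - t) mod n"
  have st: "s \<le> n" "t \<le> n" using a by auto
  have e1: "v + n - s = v + (n - s)" "v + n - t = v + (n - t)" using st by simp_all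
  have "(v + (n - s)) mod n = (v + (n - t)) mod n" using a(4) unfolding e1 .
  moreover have "n - s < n" "n - t < n" using a by auto
  ultimately have "n - s = n - t" using mod_add_inj[of "n-s" n "n-t" v] by blast
  then show "s = t" using a by auto
qed

lemma inj_add: "4 < n \<Longrightarrow> inj_on (\<lambda>s. (e + s) mod n) S0"
proof (rule inj_onI)
  fix s t assume a: "4 < n" "s \<in> S0" "t \<in> S0" "(e + s) mod n = (e + t) mod n"
  moreover have "s < n" "t < n" using a by auto
  ultimately show "s = t" using mod_add_inj[of s n t e] by blast
qed

definition suppA :: "nat \<Rightarrow> ('k::field) chain \<Rightarrow> bool" where
  "suppA n u \<longleftrightarrow> (\<forall>xs. u xs \<noteq> 0 \<longrightarrow> allowed_path n S0 xs \<and> set xs \<subseteq> {..<n})"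

lemma P0:
  assumes n: "4 < n" and su: "suppA n u" and v: "v < n"
  shows "(\<Sum>w<n. u (w # pth n v \<tau>)) = (\<Sum>s\<in>S0. u (pth n ((v+n-s) mod n) (s#\<tau>)))"
proof -
  let ?g = "\<lambda>s. (v + n - s) mod n"
  have "(\<Sum>w<n. u (w # pth n v \<tau>)) = (\<Sum>s\<in>S0. u (?g s # pth n v \<tau>))"
  proof (subst sum_sparse[of S0 ?g "{..<n}"])
    show "inj_on ?g S0" using inj_sub[OF n] .
    show "?g ` S0 \<subseteq> {..<n}" using n by auto
    fix w assume w: "w \<in> {..<n}" "u (w # pth n v \<tau>) \<noteq> 0"
    then have "allowed_path n S0 (w # pth n v \<tau>)" using su unfolding suppA_def by blast
    moreover have "pth n v \<tau> = v # tl (pth n v \<tau>)" by (cases \<tau>) auto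
    ultimately have "circ_arrow n S0 w v" using allowed_mid[of n S0 "[]" w v] by (metis append_Nil)
    then obtain s where s: "s \<in> S0" "v = (w+s) mod n" using arrowE by blast
    have "?g s = w" using s w n mod_back[of w n s] by auto
    then show "w \<in> ?g ` S0" using s by blast
  qed (auto simp: comp_def)
  also have "\<dots> = (\<Sum>s\<in>S0. u (pth n ((v+n-s) mod n) (s#\<tau>)))"
  proof (rule sum.cong[OF refl])
    fix s assume "s \<in> S0"
    then have "((v+n-s) mod n + s) mod n = v" using n v mod_fwd[of v n s] by auto
    then show "u (?g s # pth n v \<tau>) = u (pth n ((v+n-s) mod n) (s#\<tau>))" by simp
  qed
  finally show ?thesis .
qed

lemma PL:
  assumes n: "4 < n" and su: "suppA n u" and v: "v < n"
  shows "(\<Sum>w<n. u (pth n v \<tau> @ [w])) = (\<Sum>s\<in>S0. u (pth n v (\<tau> @ [s])))"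
proof -
  let ?e = "endp n v \<tau>"
  let ?g = "\<lambda>s. (?e + s) mod n"
  have pe: "pth n v \<tau> = butlast (pth n v \<tau>) @ [?e]"
    by (metis append_butlast_last_id last_pth pth_ne)
  have "(\<Sum>w<n. u (pth n v \<tau> @ [w])) = (\<Sum>s\<in>S0. u (pth n v \<tau> @ [?g s]))"
  proof (subst sum_sparse[of S0 ?g "{..<n}"])
    show "inj_on ?g S0" using inj_add[OF n] .
    show "?g ` S0 \<subseteq> {..<n}" using n by auto
    fix w assume w: "w \<in> {..<n}" "u (pth n v \<tau> @ [w]) \<noteq> 0"
    then have "allowed_path n S0 (pth n v \<tau> @ [w])" using su unfolding suppA_def by blast
    then have "allowed_path n S0 (butlast (pth n v \<tau>) @ ?e # w # [])" using pe by (metis append.assoc append_Cons append_Nil)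
    then have "circ_arrow n S0 ?e w" by (rule allowed_mid)
    then obtain s where s: "s \<in> S0" "w = (?e+s) mod n" using arrowE by blast
    then show "w \<in> ?g ` S0" by blast
  qed (auto simp: comp_def)
  also have "\<dots> = (\<Sum>s\<in>S0. u (pth n v (\<tau> @ [s])))"
    by (simp add: pth_snoc)
  finally show ?thesis .
qed

lemma pth_split:
  assumes "k < length \<tau>"
  shows "pth n v \<tau> = butlast (pth n v (take k \<tau>)) @ endp n v (take k \<tau>) #
     pth n ((endp n v (take k \<tau>) + \<tau>!k) mod n) (drop (Suc k) \<tau>)"
proof -
  have "\<tau> = take k \<tau> @ (\<tau>!k) # drop (Suc k) \<tau>" using assms by (simp add: id_take_nth_drop)
  then have "pth n v \<tau> = pth n v (take k \<tau> @ (\<tau>!k) # drop (Suc k) \<tau>)" by simp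
  also have "\<dots> = butlast (pth n v (take k \<tau>)) @ pth n (endp n v (take k \<tau>)) ((\<tau>!k) # drop (Suc k) \<tau>)"
    by (rule pth_append)
  finally show ?thesis by simp
qed

lemma mod3: "((e + s) mod n + t) mod n = (e + (s + t) mod n) mod (n::nat)"
proof -
  have "((e + s) mod n + t) mod n = (e + s + t) mod n" by (rule mod_add_left_eq)
  also have "\<dots> = (e + (s + t)) mod n" by (simp only: add.assoc)
  also have "\<dots> = (e + (s + t) mod n) mod n" by (rule mod_add_right_eq[symmetric])
  finally show ?thesis .
qed

lemma length_butlast_pth: "length (butlast (pth n v \<sigma>)) = length \<sigma>"
  by simp

lemma PI:
  assumes n: "4 < n" and su: "suppA n u" and v: "v < n" and k: "k < length \<tau>" and d: "\<tau>!k < n"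
  shows "(\<Sum>w<n. u (take (Suc k) (pth n v \<tau>) @ w # drop (Suc k) (pth n v \<tau>))) =
    (\<Sum>s\<in>S0. \<Sum>t\<in>S0. if (s+t) mod n = \<tau>!k then u (pth n v (take k \<tau> @ [s,t] @ drop (Suc k) \<tau>)) else 0)"
proof -
  let ?B = "butlast (pth n v (take k \<tau>))"
  let ?e = "endp n v (take k \<tau>)"
  let ?d = "\<tau>!k"
  let ?P = "pth n ((?e + ?d) mod n) (drop (Suc k) \<tau>)"
  have lB: "length ?B = k" using k by simp
  have ys: "pth n v \<tau> = ?B @ ?e # ?P" using pth_split[OF k] .
  have tk: "take (Suc k) (pth n v \<tau>) = ?B @ [?e]" using ys lB by simp
  have dk: "drop (Suc k) (pth n v \<tau>) = ?P" using ys lB by simp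
  have P: "?P = ((?e + ?d) mod n) # tl ?P" by (cases "drop (Suc k) \<tau>") auto
  let ?F = "\<lambda>w. u (?B @ ?e # w # ?P)"
  let ?g = "\<lambda>s. (?e + s) mod n"
  have "(\<Sum>w<n. u (take (Suc k) (pth n v \<tau>) @ w # drop (Suc k) (pth n v \<tau>))) = (\<Sum>w<n. ?F w)"
    unfolding tk dk by simp
  also have "\<dots> = (\<Sum>s\<in>S0. ?F (?g s))"
  proof (subst sum_sparse[of S0 ?g "{..<n}"])
    show "inj_on ?g S0" using inj_add[OF n] .
    show "?g ` S0 \<subseteq> {..<n}" using n by auto
    fix w assume w: "w \<in> {..<n}" "?F w \<noteq> 0"
    then have "allowed_path n S0 (?B @ ?e # w # ?P)" using su unfolding suppA_def by blast
    then have "circ_arrow n S0 ?e w" by (rule allowed_mid)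
    then obtain s where s: "s \<in> S0" "w = (?e+s) mod n" using arrowE by blast
    then show "w \<in> ?g ` S0" by blast
  qed (auto simp: comp_def)
  also have "\<dots> = (\<Sum>s\<in>S0. \<Sum>t\<in>S0. if (s+t) mod n = ?d then u (pth n v (take k \<tau> @ [s,t] @ drop (Suc k) \<tau>)) else 0)"
  proof (rule sum.cong[OF refl])
    fix s assume s: "s \<in> S0"
    show "?F (?g s) = (\<Sum>t\<in>S0. if (s+t) mod n = ?d then u (pth n v (take k \<tau> @ [s,t] @ drop (Suc k) \<tau>)) else 0)"
    proof (cases "\<exists>t\<in>S0. (s+t) mod n = ?d")
      case True
      then obtain t where t: "t \<in> S0" "(s+t) mod n = ?d" by blast
      have uniq: "t' = t" if "t' \<in> S0" "(s+t') mod n = ?d" for t'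
      proof -
        have "t' < n" "t < n" using that(1) t(1) n by auto
        moreover have "(s + t') mod n = (s + t) mod n" using that(2) t(2) by simp
        ultimately show ?thesis using mod_add_inj[of t' n t s] by blast
      qed
      have "(\<Sum>t'\<in>S0. if (s+t') mod n = ?d then u (pth n v (take k \<tau> @ [s,t'] @ drop (Suc k) \<tau>)) else 0)
          = (\<Sum>t'\<in>S0. if t' = t then u (pth n v (take k \<tau> @ [s,t] @ drop (Suc k) \<tau>)) else 0)"
      proof (rule sum.cong[OF refl])
        fix t' assume t': "t' \<in> S0"
        show "(if (s+t') mod n = ?d then u (pth n v (take k \<tau> @ [s,t'] @ drop (Suc k) \<tau>)) else 0)
          = (if t' = t then u (pth n v (take k \<tau> @ [s,t] @ drop (Suc k) \<tau>)) else 0)"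
        proof (cases "t' = t")
          case True then show ?thesis using t(2) by simp
        next
          case False
          then have "(s+t') mod n \<noteq> ?d" using uniq t' by blast
          then show ?thesis using False by simp
        qed
      qed
      also have "\<dots> = u (pth n v (take k \<tau> @ [s,t] @ drop (Suc k) \<tau>))" using t(1) by simp
      also have "pth n v (take k \<tau> @ [s,t] @ drop (Suc k) \<tau>) = ?B @ ?e # ?g s # ?P"
      proof -
        have "pth n v (take k \<tau> @ [s,t] @ drop (Suc k) \<tau>) = ?B @ pth n ?e (s # t # drop (Suc k) \<tau>)"
          by (simp only: pth_append append.simps)
        also have "pth n ?e (s # t # drop (Suc k) \<tau>) = ?e # ?g s # pth n ((?g s + t) mod n) (drop (Suc k) \<tau>)"
          by simp
        also have "(?g s + t) mod n = (?e + ?d) mod n"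
        proof -
          have "(?g s + t) mod n = (?e + (s+t) mod n) mod n" by (rule mod3)
          then show ?thesis using t(2) by simp
        qed
        finally show ?thesis .
      qed
      finally show ?thesis by simp
    next
      case False
      have "?F (?g s) = 0"
      proof (rule ccontr)
        assume "?F (?g s) \<noteq> 0"
        then have "allowed_path n S0 (?B @ ?e # ?g s # ?P)" using su unfolding suppA_def by blast
        then have "allowed_path n S0 ((?B @ [?e]) @ ?g s # ((?e + ?d) mod n) # tl ?P)"
          using P by (metis append.assoc append_Cons append_Nil)
        then have "circ_arrow n S0 (?g s) ((?e + ?d) mod n)" by (rule allowed_mid)
        then obtain t where t: "t \<in> S0" "(?e + ?d) mod n = (?g s + t) mod n" using arrowE by blast
        have "(?g s + t) mod n = (?e + (s+t) mod n) mod n" by (rule mod3)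
        moreover have "(s+t) mod n < n" using n by simp
        ultimately have "?d = (s+t) mod n" using t(2) d mod_add_inj[of ?d n "(s+t) mod n" ?e] by simp
        then show False using False t(1) by auto
      qed
      moreover have "(\<Sum>t\<in>S0. if (s+t) mod n = ?d then u (pth n v (take k \<tau> @ [s,t] @ drop (Suc k) \<tau>)) else 0) = 0"
        using False by (intro sum.neutral) auto
      ultimately show ?thesis by simp
    qed
  qed
  finally show ?thesis .
qed

lemma bdp:
  assumes n: "4 < n" and su: "suppA n u" and v: "v < n" and tau: "\<forall>s\<in>set \<tau>. 0 < s \<and> s < n"
  shows "bd n u (pth n v \<tau>) = (\<Sum>s\<in>S0. u (pth n ((v+n-s) mod n) (s#\<tau>)))
   + (\<Sum>k<length \<tau>. (-1)^(Suc k) * (\<Sum>s\<in>S0. \<Sum>t\<in>S0. if (s+t) mod n = \<tau>!k then u (pth n v (take k \<tau> @ [s,t] @ drop (Suc k) \<tau>)) else 0))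
   + (-1)^(Suc (length \<tau>)) * (\<Sum>s\<in>S0. u (pth n v (\<tau> @ [s])))"
proof -
  let ?ys = "pth n v \<tau>"
  let ?f = "\<lambda>j. (-1)^j * (\<Sum>w<n. u (take j ?ys @ w # drop j ?ys))"
  have "bd n u ?ys = (\<Sum>j\<le>length ?ys. ?f j)"
    by (rule bd_ins) (use regular_pth[OF v] tau set_pth[OF v] in auto)
  also have "\<dots> = (\<Sum>j\<le>length \<tau>. ?f j) + ?f (Suc (length \<tau>))"
    by simp
  also have "(\<Sum>j\<le>length \<tau>. ?f j) = ?f 0 + (\<Sum>k<length \<tau>. ?f (Suc k))"
    by (rule sum.atMost_shift)
  also have "?f 0 = (\<Sum>s\<in>S0. u (pth n ((v+n-s) mod n) (s#\<tau>)))"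
    using P0[OF n su v] by simp
  also have "(\<Sum>k<length \<tau>. ?f (Suc k)) = (\<Sum>k<length \<tau>. (-1)^(Suc k) * (\<Sum>s\<in>S0. \<Sum>t\<in>S0. if (s+t) mod n = \<tau>!k then u (pth n v (take k \<tau> @ [s,t] @ drop (Suc k) \<tau>)) else 0))"
  proof (rule sum.cong[OF refl])
    fix k assume "k \<in> {..<length \<tau>}"
    then have k: "k < length \<tau>" by simp
    then have "\<tau>!k < n" using tau nth_mem by blast
    then show "?f (Suc k) = (-1)^(Suc k) * (\<Sum>s\<in>S0. \<Sum>t\<in>S0. if (s+t) mod n = \<tau>!k then u (pth n v (take k \<tau> @ [s,t] @ drop (Suc k) \<tau>)) else 0)"
      using PI[OF n su v k] by simp
  qed
  also have "?f (Suc (length \<tau>)) = (-1)^(Suc (length \<tau>)) * (\<Sum>s\<in>S0. u (pth n v (\<tau> @ [s])))"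
    using PL[OF n su v] by simp
  finally show ?thesis .
qed

definition Phi :: "nat \<Rightarrow> nat \<Rightarrow> ('k::field) coef \<Rightarrow> 'k chain" where
  "Phi n m c xs = (if xs \<noteq> [] \<and> set xs \<subseteq> {..<n} \<and> length xs = Suc m \<and> allowed_path n S0 xs
      \<and> count_list (stp n xs) 4 \<le> 1
    then (-1)^ninv (stp n xs) * c (int (hd xs)) (count_list (stp n xs) 1) (count_list (stp n xs) 2)
       (count_list (stp n xs) 4) else 0)"

definition Psi :: "nat \<Rightarrow> ('k::field) chain \<Rightarrow> 'k coef" where
  "Psi n u v a b e = u (pth n (nat (v mod int n)) (cs a b e))"

lemma Phi_pth:
  assumes n: "4 < n" and v: "v < n" and sl: "\<forall>s\<in>set \<sigma>. s < n"
  shows "Phi n m c (pth n v \<sigma>) = (if length \<sigma> = m \<and> set \<sigma> \<subseteq> S0 \<and> count_list \<sigma> 4 \<le> 1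
     then (-1)^ninv \<sigma> * c (int v) (count_list \<sigma> 1) (count_list \<sigma> 2) (count_list \<sigma> 4) else 0)"
proof -
  have st: "stp n (pth n v \<sigma>) = \<sigma>" using stp_pth[OF v sl] .
  have al: "allowed_path n S0 (pth n v \<sigma>) \<longleftrightarrow> set \<sigma> \<subseteq> S0" using allowed_pth[OF v sl n] .
  show ?thesis unfolding Phi_def st al using set_pth[OF v, of \<sigma>] by auto
qed

lemma suppA_Phi: "suppA n (Phi n m c)"
  unfolding suppA_def Phi_def by (auto split: if_splits)

lemma allowed_regular:
  assumes "xs \<noteq> []" "set xs \<subseteq> {..<n}" "allowed_path n S0 xs" "4 < n"
  shows "regular_path xs"
proof -
  from allowed_decomp[OF assms] have d: "xs = pth n (hd xs) (stp n xs)" "set (stp n xs) \<subseteq> S0" "hd xs < n"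
    by auto
  have "\<forall>s\<in>set (stp n xs). 0 < s \<and> s < n" using d(2) assms(4) by auto
  then show ?thesis using regular_pth[OF d(3)] d(1) by metis
qed

lemma Phi_Apaths: "4 < n \<Longrightarrow> Phi n m c \<in> Apaths n S0 m"
  unfolding Apaths_def chains_def vpaths_def
  using allowed_regular[of _ n] by (auto simp: Phi_def split: if_splits)

lemma Phi_antisym:
  assumes n: "4 < n" and v: "v < n" and sl: "\<forall>x\<in>set \<alpha> \<union> set \<beta>. x < n" and st: "s < n" "t < n" "s \<noteq> t"
  shows "Phi n m c (pth n v (\<alpha>@[s,t]@\<beta>)) = - Phi n m c (pth n v (\<alpha>@[t,s]@\<beta>))"
proof -
  have s1: "\<forall>x\<in>set (\<alpha>@[s,t]@\<beta>). x < n" "\<forall>x\<in>set (\<alpha>@[t,s]@\<beta>). x < n" using sl st by auto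
  show ?thesis unfolding Phi_pth[OF n v s1(1)] Phi_pth[OF n v s1(2)]
    using sign_swap[OF st(3), of \<alpha> \<beta>] by auto
qed

lemma Phi_44:
  assumes n: "4 < n" and v: "v < n" and sl: "\<forall>x\<in>set \<alpha> \<union> set \<beta>. x < n"
  shows "Phi n m c (pth n v (\<alpha>@[4,4]@\<beta>)) = 0"
proof -
  have s1: "\<forall>x\<in>set (\<alpha>@[4,4]@\<beta>). x < n" using sl n by auto
  show ?thesis unfolding Phi_pth[OF n v s1] by simp
qed

lemma Phi_dswap:
  assumes n: "4 < n" and v: "v < n" and sl: "\<forall>x\<in>set \<alpha> \<union> set \<beta>. x < n" and st: "p < n" "t < n"
  shows "Phi n m c (pth n v (\<alpha>@[p,p,t]@\<beta>)) = Phi n m c (pth n v (\<alpha>@[t,p,p]@\<beta>))"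
proof (cases "p = t")
  case True then show ?thesis by simp
next
  case False
  have "Phi n m c (pth n v ((\<alpha>@[p])@[p,t]@\<beta>)) = - Phi n m c (pth n v ((\<alpha>@[p])@[t,p]@\<beta>))"
    using Phi_antisym[OF n v _ st(1,2) False, of "\<alpha>@[p]" \<beta>] sl st by auto
  also have "(\<alpha>@[p])@[t,p]@\<beta> = \<alpha>@[p,t]@([p]@\<beta>)" by simp
  also have "Phi n m c (pth n v (\<alpha>@[p,t]@([p]@\<beta>))) = - Phi n m c (pth n v (\<alpha>@[t,p]@([p]@\<beta>)))"
    using Phi_antisym[OF n v _ st(1,2) False, of \<alpha> "[p]@\<beta>"] sl st by auto
  finally show ?thesis by simp
qed

lemma supp_bad:
  assumes su: "suppA n u" and n: "4 < n" and v: "v < n" and sl: "\<forall>s\<in>set \<sigma>. s < n"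
    and x: "x \<in> set \<sigma>" "x \<notin> S0"
  shows "u (pth n v \<sigma>) = 0"
proof (rule ccontr)
  assume "u (pth n v \<sigma>) \<noteq> 0"
  then have "allowed_path n S0 (pth n v \<sigma>)" using su unfolding suppA_def by blast
  then have "set \<sigma> \<subseteq> S0" using allowed_pth[OF v sl n] by simp
  then show False using x by auto
qed

lemma other_pos:
  assumes "j < length \<tau>" "k < length \<tau>" "k \<noteq> j"
  shows "\<tau>!j \<in> set (take k \<tau> @ [s,t] @ drop (Suc k) \<tau>)"
proof (cases "j < k")
  case True
  then have "\<tau>!j = take k \<tau> ! j" by simp
  moreover have "j < length (take k \<tau>)" using True assms by simp
  ultimately show ?thesis by (metis Un_iff nth_mem set_append)
next
  case False
  then have jk: "k < j" using assms by simp
  then have "\<tau>!j = drop (Suc k) \<tau> ! (j - Suc k)" using assms by simp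
  moreover have "j - Suc k < length (drop (Suc k) \<tau>)" using jk assms by simp
  ultimately show ?thesis by (metis Un_iff nth_mem set_append)
qed

lemma sum9: "(\<Sum>s\<in>S0. \<Sum>t\<in>S0. G s t) = G 1 1 + G 1 2 + G 1 4 + G 2 1 + G 2 2 + G 2 4 + G 4 1 + G 4 2 + (G 4 4::'k::field)"
  by (simp add: algebra_simps)

lemma pair_cancel:
  fixes F :: "nat \<Rightarrow> nat \<Rightarrow> 'k::field"
  assumes "F 1 2 = - F 2 1" "F 1 4 = - F 4 1" "F 2 4 = - F 4 2" "F 4 4 = 0" "d \<noteq> 2" "d \<noteq> 4" "8 < n"
  shows "(\<Sum>s\<in>S0. \<Sum>t\<in>S0. if (s+t) mod n = d then F s t else 0) = 0"
proof -
  have m: "(1+1) mod n = 2" "(1+2) mod n = 3" "(1+4) mod n = 5" "(2+1) mod n = 3" "(2+2) mod n = 4"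
    "(2+4) mod n = 6" "(4+1) mod n = 5" "(4+2) mod n = 6" "(4+4) mod n = (8::nat)"
    using assms(7) by simp_all
  show ?thesis unfolding sum9 m using assms(1-6) by auto
qed

lemma pair_sum:
  fixes F :: "nat \<Rightarrow> nat \<Rightarrow> 'k::field"
  assumes "s \<in> S0" "t \<in> S0" "s \<noteq> t" "8 < n"
  shows "(\<Sum>s'\<in>S0. \<Sum>t'\<in>S0. if (s'+t') mod n = s + t then F s' t' else 0) = F s t + F t s"
proof -
  have m: "(1+1) mod n = 2" "(1+2) mod n = 3" "(1+4) mod n = 5" "(2+1) mod n = 3" "(2+2) mod n = 4"
    "(2+4) mod n = 6" "(4+1) mod n = 5" "(4+2) mod n = 6" "(4+4) mod n = (8::nat)"
    using assms(4) by simp_all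
  show ?thesis unfolding sum9 m using assms(1-3) by (auto simp: algebra_simps)
qed

lemma pair_44:
  fixes F :: "nat \<Rightarrow> nat \<Rightarrow> 'k::field"
  assumes "8 < n"
  shows "(\<Sum>s'\<in>S0. \<Sum>t'\<in>S0. if (s'+t') mod n = 8 then F s' t' else 0) = F 4 4"
proof -
  have m: "(1+1) mod n = 2" "(1+2) mod n = 3" "(1+4) mod n = 5" "(2+1) mod n = 3" "(2+2) mod n = 4"
    "(2+4) mod n = 6" "(4+1) mod n = 5" "(4+2) mod n = 6" "(4+4) mod n = (8::nat)"
    using assms(1) by simp_all
  show ?thesis unfolding sum9 m by simp
qed

lemma Apaths_suppA: "u \<in> Apaths n S0 m \<Longrightarrow> suppA n u"
  unfolding Apaths_def chains_def vpaths_def suppA_def by blast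

lemma stp_pos: "regular_path ys \<Longrightarrow> set ys \<subseteq> {..<n} \<Longrightarrow> \<forall>s\<in>set (stp n ys). 0 < s"
proof (induction n ys rule: stp.induct)
  case (1 n x y r)
  have xy: "x \<noteq> y" "x < n" "y < n" using 1(2,3) regular_Cons2 by auto
  have "(y + n - x) mod n \<noteq> 0"
  proof
    assume "(y + n - x) mod n = 0"
    then have "(x + (y + n - x) mod n) mod n = x mod n" by simp
    then have "y = x" using mod_step_back[of x n y] xy by simp
    then show False using xy by simp
  qed
  moreover have "\<forall>s\<in>set (stp n (y#r)). 0 < s" using 1 regular_Cons2 by auto
  ultimately show ?case by auto
qed auto

lemma sum_single:
  assumes "j < (N::nat)" "\<And>k. k < N \<Longrightarrow> k \<noteq> j \<Longrightarrow> g k = 0"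
  shows "(\<Sum>k<N. g k) = (g j :: 'k::field)"
proof -
  have "(\<Sum>k<N. g k) = g j + (\<Sum>k\<in>{..<N} - {j}. g k)"
    using assms(1) by (intro sum.remove) auto
  also have "(\<Sum>k\<in>{..<N} - {j}. g k) = 0" using assms(2) by (intro sum.neutral) auto
  finally show ?thesis by simp
qed

lemma ys_decomp:
  assumes "ys \<noteq> []" "regular_path ys" "set ys \<subseteq> {..<n}" "0 < n"
  shows "ys = pth n (hd ys) (stp n ys) \<and> hd ys < n \<and> (\<forall>s\<in>set (stp n ys). 0 < s \<and> s < n)"
  using pth_stp[OF assms(1,3)] stp_pos[OF assms(2,3)] set_stp_lt[OF assms(4)] assms(1,3)
  by (cases ys) auto

lemma bd_Phi_allowed:
  assumes n: "10 < n" and nz: "bd n (Phi n m c) ys \<noteq> 0"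
  shows "allowed_path n S0 ys"
proof (rule ccontr)
  assume na: "\<not> allowed_path n S0 ys"
  from nz have ys: "ys \<noteq> []" "regular_path ys" "set ys \<subseteq> {..<n}" unfolding bd_def by (auto split: if_splits)
  define v where "v = hd ys"
  define \<tau> where "\<tau> = stp n ys"
  have e: "ys = pth n v \<tau>" and v: "v < n" and tau: "\<forall>s\<in>set \<tau>. 0 < s \<and> s < n"
    using ys_decomp[OF ys] n unfolding v_def \<tau>_def by auto
  have n4: "4 < n" using n by simp
  have tl: "\<forall>s\<in>set \<tau>. s < n" using tau by auto
  have "\<not> set \<tau> \<subseteq> S0" using na allowed_pth[OF v tl n4] e by simp
  then obtain j where j: "j < length \<tau>" "\<tau>!j \<notin> S0" by (metis in_set_conv_nth subsetI)
  let ?u = "Phi n m c"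
  have su: "suppA n ?u" by (rule suppA_Phi)
  have A: "(\<Sum>s\<in>S0. ?u (pth n ((v+n-s) mod n) (s#\<tau>))) = 0"
  proof (rule sum.neutral, rule ballI)
    fix s assume s: "s \<in> S0"
    show "?u (pth n ((v+n-s) mod n) (s#\<tau>)) = 0"
      by (rule supp_bad[OF su n4 _ _ _ j(2)]) (use n4 s tl j(1) in auto)
  qed
  have C: "(\<Sum>s\<in>S0. ?u (pth n v (\<tau> @ [s]))) = 0"
  proof (rule sum.neutral, rule ballI)
    fix s assume s: "s \<in> S0"
    show "?u (pth n v (\<tau> @ [s])) = 0"
      by (rule supp_bad[OF su n4 v _ _ j(2)]) (use n4 s tl j(1) in auto)
  qed
  have B: "(\<Sum>k<length \<tau>. (-1)^(Suc k) * (\<Sum>s\<in>S0. \<Sum>t\<in>S0. if (s+t) mod n = \<tau>!k then ?u (pth n v (take k \<tau> @ [s,t] @ drop (Suc k) \<tau>)) else 0)) = 0"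
  proof (rule sum.neutral, rule ballI)
    fix k assume "k \<in> {..<length \<tau>}"
    then have k: "k < length \<tau>" by simp
    let ?F = "\<lambda>s t. ?u (pth n v (take k \<tau> @ [s,t] @ drop (Suc k) \<tau>))"
    have sl: "\<forall>x\<in>set (take k \<tau>) \<union> set (drop (Suc k) \<tau>). x < n"
      using tl by (auto dest: in_set_takeD in_set_dropD)
    have "(\<Sum>s\<in>S0. \<Sum>t\<in>S0. if (s+t) mod n = \<tau>!k then ?F s t else 0) = 0"
    proof (cases "\<tau>!k \<in> S0")
      case False
      have f: "?F 1 2 = - ?F 2 1" "?F 1 4 = - ?F 4 1" "?F 2 4 = - ?F 4 2" "?F 4 4 = 0"
        using Phi_antisym[OF n4 v sl, of 1 2] Phi_antisym[OF n4 v sl, of 1 4]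
          Phi_antisym[OF n4 v sl, of 2 4] Phi_44[OF n4 v sl] n by auto
      show ?thesis
        by (rule pair_cancel[OF f]) (use False n in auto)
    next
      case True
      then have kj: "k \<noteq> j" using j by auto
      show ?thesis
      proof (rule sum.neutral, rule ballI, rule sum.neutral, rule ballI)
        fix s t assume st: "s \<in> S0" "t \<in> S0"
        have "?F s t = 0"
          by (rule supp_bad[OF su n4 v _ other_pos[OF j(1) k kj] j(2)])
             (use tl st n4 in \<open>auto dest: in_set_takeD in_set_dropD\<close>)
        then show "(if (s+t) mod n = \<tau>!k then ?F s t else 0) = 0" by simp
      qed
    qed
    then show "(-1)^(Suc k) * (\<Sum>s\<in>S0. \<Sum>t\<in>S0. if (s+t) mod n = \<tau>!k then ?F s t else 0) = 0" by simp
  qed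
  have "bd n ?u ys = 0"
    unfolding e bdp[OF n4 su v tau] A B C by simp
  then show False using nz by simp
qed

lemma bd_chains:
  assumes "u \<in> chains n (Suc m)"
  shows "bd n u \<in> chains n m"
  unfolding chains_def
proof (intro CollectI allI impI)
  fix ys assume nz: "bd n u ys \<noteq> 0"
  then have ys: "ys \<noteq> []" "regular_path ys" "set ys \<subseteq> {..<n}" unfolding bd_def by (auto split: if_splits)
  have "length ys = Suc m"
  proof (rule ccontr)
    assume ne: "length ys \<noteq> Suc m"
    have "\<forall>xs\<in>vpaths n (Suc (length ys)). u xs = 0"
      using assms ne unfolding chains_def vpaths_def by auto
    then have "bd n u ys = 0" unfolding bd_def by (auto intro!: sum.neutral)
    then show False using nz by simp
  qed
  then show "ys \<in> vpaths n (Suc m) \<and> regular_path ys" using ys unfolding vpaths_def by auto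
qed

lemma Phi_Omega:
  assumes n: "10 < n"
  shows "Phi n m c \<in> Omega n S0 m"
proof (cases m)
  case 0 then show ?thesis using Phi_Apaths[of n] n by (simp add: Omega_def)
next
  case (Suc m')
  have ch: "bd n (Phi n m c) \<in> chains n m'"
    using bd_chains Phi_Apaths[of n m c] n Suc unfolding Apaths_def by auto
  then have "bd n (Phi n m c) \<in> Apaths n S0 m'"
    unfolding Apaths_def using bd_Phi_allowed[OF n] by auto
  then show ?thesis using Phi_Apaths[of n m c] n Suc by (simp add: Omega_def)
qed

definition asym :: "nat \<Rightarrow> nat \<Rightarrow> ('k::field) chain \<Rightarrow> bool" where
  "asym n m u \<longleftrightarrow> u \<in> Apaths n S0 m \<and>
   (\<forall>v \<alpha> \<beta> s t. v < n \<longrightarrow> set \<alpha> \<subseteq> S0 \<longrightarrow> set \<beta> \<subseteq> S0 \<longrightarrow> s \<in> S0 \<longrightarrow> t \<in> S0 \<longrightarrow> s \<noteq> t \<longrightarrow>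
       length \<alpha> + length \<beta> + 2 = m \<longrightarrow> u (pth n v (\<alpha>@[s,t]@\<beta>)) = - u (pth n v (\<alpha>@[t,s]@\<beta>))) \<and>
   (\<forall>v \<alpha> \<beta>. v < n \<longrightarrow> set \<alpha> \<subseteq> S0 \<longrightarrow> set \<beta> \<subseteq> S0 \<longrightarrow> length \<alpha> + length \<beta> + 2 = m \<longrightarrow>
       u (pth n v (\<alpha>@[4,4]@\<beta>)) = 0)"

lemma count_sum: "set \<sigma> \<subseteq> S0 \<Longrightarrow> count_list \<sigma> 1 + count_list \<sigma> 2 + count_list \<sigma> 4 = length \<sigma>"
  by (induction \<sigma>) auto

lemma bd_single_bad:
  assumes n: "10 < n" and su: "suppA n u" and v: "v < n" and ab: "set \<alpha> \<subseteq> S0" "set \<beta> \<subseteq> S0"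
    and d: "d \<notin> S0" "0 < d" "d < n"
  shows "bd n u (pth n v (\<alpha>@[d]@\<beta>)) = (-1)^(Suc (length \<alpha>)) *
     (\<Sum>s\<in>S0. \<Sum>t\<in>S0. if (s+t) mod n = d then u (pth n v (\<alpha>@[s,t]@\<beta>)) else 0)"
proof -
  define \<tau> where "\<tau> = \<alpha>@[d]@\<beta>"
  have n4: "4 < n" using n by simp
  have tau: "\<forall>s\<in>set \<tau>. 0 < s \<and> s < n" using ab d n unfolding \<tau>_def by auto
  have tl: "\<forall>s\<in>set \<tau>. s < n" using tau by auto
  have dj: "\<tau>!length \<alpha> = d" "length \<alpha> < length \<tau>" unfolding \<tau>_def by auto
  have dset: "d \<in> set \<tau>" unfolding \<tau>_def by simp
  have A: "(\<Sum>s\<in>S0. u (pth n ((v+n-s) mod n) (s#\<tau>))) = 0"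
  proof (rule sum.neutral, rule ballI)
    fix s assume s: "s \<in> S0"
    show "u (pth n ((v+n-s) mod n) (s#\<tau>)) = 0"
      by (rule supp_bad[OF su n4 _ _ _ d(1)]) (use n4 s tl dset in auto)
  qed
  have C: "(\<Sum>s\<in>S0. u (pth n v (\<tau> @ [s]))) = 0"
  proof (rule sum.neutral, rule ballI)
    fix s assume s: "s \<in> S0"
    show "u (pth n v (\<tau> @ [s])) = 0"
      by (rule supp_bad[OF su n4 v _ _ d(1)]) (use n4 s tl dset in auto)
  qed
  let ?g = "\<lambda>k. (-1)^(Suc k) * (\<Sum>s\<in>S0. \<Sum>t\<in>S0. if (s+t) mod n = \<tau>!k then u (pth n v (take k \<tau> @ [s,t] @ drop (Suc k) \<tau>)) else 0)"
  have B: "(\<Sum>k<length \<tau>. ?g k) = ?g (length \<alpha>)"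
  proof (rule sum_single[OF dj(2)])
    fix k assume k: "k < length \<tau>" "k \<noteq> length \<alpha>"
    have "(\<Sum>s\<in>S0. \<Sum>t\<in>S0. if (s+t) mod n = \<tau>!k then u (pth n v (take k \<tau> @ [s,t] @ drop (Suc k) \<tau>)) else 0) = 0"
    proof (rule sum.neutral, rule ballI, rule sum.neutral, rule ballI)
      fix s t assume st: "s \<in> S0" "t \<in> S0"
      have "u (pth n v (take k \<tau> @ [s,t] @ drop (Suc k) \<tau>)) = 0"
        by (rule supp_bad[OF su n4 v _ _ d(1)])
           (use tl st n4 other_pos[OF dj(2) k(1) k(2)] dj(1) in \<open>auto dest: in_set_takeD in_set_dropD\<close>)
      then show "(if (s+t) mod n = \<tau>!k then u (pth n v (take k \<tau> @ [s,t] @ drop (Suc k) \<tau>)) else 0) = 0" by simp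
    qed
    then show "?g k = 0" by simp
  qed
  have "take (length \<alpha>) \<tau> = \<alpha>" "drop (Suc (length \<alpha>)) \<tau> = \<beta>" unfolding \<tau>_def by auto
  then have "?g (length \<alpha>) = (-1)^(Suc (length \<alpha>)) *
     (\<Sum>s\<in>S0. \<Sum>t\<in>S0. if (s+t) mod n = d then u (pth n v (\<alpha>@[s,t]@\<beta>)) else 0)"
    using dj(1) by simp
  then show ?thesis
    using bdp[OF n4 su v tau] A B C unfolding \<tau>_def by simp
qed

lemma Omega_Apaths: "u \<in> Omega n S m \<Longrightarrow> u \<in> Apaths n S m"
  unfolding Omega_def by (auto split: if_splits)

lemma Omega_asym:
  assumes n: "10 < n" and u: "u \<in> Omega n S0 m"
  shows "asym n m u"
proof -
  have Ap: "u \<in> Apaths n S0 m" using Omega_Apaths[OF u] .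
  have su: "suppA n u" using Apaths_suppA[OF Ap] .
  have n4: "4 < n" using n by simp
  have key: "bd n u (pth n v (\<alpha>@[d]@\<beta>)) = 0"
    if "v < n" "set \<alpha> \<subseteq> S0" "set \<beta> \<subseteq> S0" "d \<notin> S0" "0 < d" "d < n" "length \<alpha> + length \<beta> + 2 = m"
    for v \<alpha> \<beta> d
  proof (rule ccontr)
    assume nz: "bd n u (pth n v (\<alpha>@[d]@\<beta>)) \<noteq> 0"
    have "m \<noteq> 0" using that by simp
    then have "bd n u \<in> Apaths n S0 (m-1)" using u unfolding Omega_def by simp
    then have "allowed_path n S0 (pth n v (\<alpha>@[d]@\<beta>))" using nz unfolding Apaths_def by blast
    moreover have "\<forall>s\<in>set (\<alpha>@[d]@\<beta>). s < n" using that n by auto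
    ultimately have "set (\<alpha>@[d]@\<beta>) \<subseteq> S0" using allowed_pth[OF that(1) _ n4] by blast
    then show False using that(4) by simp
  qed
  have P1: "u (pth n v (\<alpha>@[s,t]@\<beta>)) = - u (pth n v (\<alpha>@[t,s]@\<beta>))"
    if "v < n" "set \<alpha> \<subseteq> S0" "set \<beta> \<subseteq> S0" "s \<in> S0" "t \<in> S0" "s \<noteq> t" "length \<alpha> + length \<beta> + 2 = m"
    for v \<alpha> \<beta> s t
  proof -
    have d: "s + t \<notin> S0" "0 < s + t" "s + t < n" using that(4-6) n by auto
    have "0 = bd n u (pth n v (\<alpha>@[s+t]@\<beta>))" using key[OF that(1-3) d that(7)] by simp
    also have "\<dots> = (-1)^(Suc (length \<alpha>)) *
     (\<Sum>s'\<in>S0. \<Sum>t'\<in>S0. if (s'+t') mod n = s + t then u (pth n v (\<alpha>@[s',t']@\<beta>)) else 0)"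
      by (rule bd_single_bad[OF n su that(1-3) d])
    also have "(\<Sum>s'\<in>S0. \<Sum>t'\<in>S0. if (s'+t') mod n = s + t then u (pth n v (\<alpha>@[s',t']@\<beta>)) else 0)
       = u (pth n v (\<alpha>@[s,t]@\<beta>)) + u (pth n v (\<alpha>@[t,s]@\<beta>))"
      by (rule pair_sum) (use that n in auto)
    finally have "u (pth n v (\<alpha>@[s,t]@\<beta>)) + u (pth n v (\<alpha>@[t,s]@\<beta>)) = 0" by simp
    then show ?thesis by (simp add: eq_neg_iff_add_eq_0)
  qed
  have P2: "u (pth n v (\<alpha>@[4,4]@\<beta>)) = 0"
    if "v < n" "set \<alpha> \<subseteq> S0" "set \<beta> \<subseteq> S0" "length \<alpha> + length \<beta> + 2 = m"
    for v \<alpha> \<beta>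
  proof -
    have d: "(8::nat) \<notin> S0" "0 < (8::nat)" "8 < n" using n by auto
    have "0 = bd n u (pth n v (\<alpha>@[8]@\<beta>))" using key[OF that(1-3) d that(4)] by simp
    also have "\<dots> = (-1)^(Suc (length \<alpha>)) *
     (\<Sum>s'\<in>S0. \<Sum>t'\<in>S0. if (s'+t') mod n = 8 then u (pth n v (\<alpha>@[s',t']@\<beta>)) else 0)"
      by (rule bd_single_bad[OF n su that(1-3) d])
    also have "(\<Sum>s'\<in>S0. \<Sum>t'\<in>S0. if (s'+t') mod n = 8 then u (pth n v (\<alpha>@[s',t']@\<beta>)) else 0)
       = u (pth n v (\<alpha>@[4,4]@\<beta>))"
      by (rule pair_44) (use n in auto)
    finally show ?thesis by simp
  qed
  show ?thesis unfolding asym_def using Ap P1 P2 by blast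
qed

lemma asym_Phi_Psi:
  assumes n: "10 < n" and a: "asym n m u"
  shows "Phi n m (Psi n u) = u"
proof
  fix xs
  have n4: "4 < n" using n by simp
  have Ap: "u \<in> Apaths n S0 m" using a unfolding asym_def by blast
  show "Phi n m (Psi n u) xs = u xs"
  proof (cases "xs \<noteq> [] \<and> set xs \<subseteq> {..<n} \<and> length xs = Suc m \<and> allowed_path n S0 xs")
    case False
    then have "u xs = 0" using Ap unfolding Apaths_def chains_def vpaths_def by auto
    moreover have "Phi n m (Psi n u) xs = 0" using False unfolding Phi_def by auto
    ultimately show ?thesis by simp
  next
    case True
    then have d: "xs = pth n (hd xs) (stp n xs)" "set (stp n xs) \<subseteq> S0" "hd xs < n"
      using allowed_decomp[of xs n] n4 by auto
    define v where "v = hd xs"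
    define \<sigma> where "\<sigma> = stp n xs"
    have xs: "xs = pth n v \<sigma>" and sig: "set \<sigma> \<subseteq> S0" and v: "v < n"
      using d unfolding v_def \<sigma>_def by auto
    have ls: "length \<sigma> = m" using True xs by (metis Suc_inject length_pth)
    have sl: "\<forall>s\<in>set \<sigma>. s < n" using sig n4 by auto
    let ?f = "\<lambda>\<sigma>. u (pth n v \<sigma>)"
    have sw: "?f (\<alpha>@[s,t]@\<beta>) = - ?f (\<alpha>@[t,s]@\<beta>)"
      if "s\<in>S0" "t\<in>S0" "s\<noteq>t" "set \<alpha> \<subseteq> S0" "set \<beta> \<subseteq> S0" "length \<alpha> + length \<beta> + 2 = m" for \<alpha> \<beta> s t
      using a v that unfolding asym_def by blast
    have ss: "?f \<sigma> = (-1)^ninv \<sigma> * ?f (cs (count_list \<sigma> 1) (count_list \<sigma> 2) (count_list \<sigma> 4))"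
      by (rule sort_sign[where f="\<lambda>\<sigma>. u (pth n v \<sigma>)", OF sw sig ls]) auto
    have vv: "nat (int v mod int n) = v" using v by simp
    show ?thesis
    proof (cases "count_list \<sigma> 4 \<le> 1")
      case True
      then show ?thesis unfolding xs Phi_pth[OF n4 v sl] Psi_def using ss ls sig vv by simp
    next
      case False
      let ?c1 = "count_list \<sigma> 1" and ?c2 = "count_list \<sigma> 2" and ?c4 = "count_list \<sigma> 4"
      have "length (cs ?c1 ?c2 ?c4) = m"
        using count_sum[OF sig] ls by simp
      have e: "cs ?c1 ?c2 ?c4 = (replicate ?c1 1 @ replicate ?c2 2 @ replicate (?c4-2) 4) @ [4,4] @ []"
        using False by (intro cs_44) simp
      have "?f (cs ?c1 ?c2 ?c4) = 0"
        unfolding e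
      proof (rule a[unfolded asym_def, THEN conjunct2, THEN conjunct2, rule_format, OF v])
        show "set (replicate ?c1 1 @ replicate ?c2 2 @ replicate (?c4-2) 4) \<subseteq> S0" by auto
        show "set [] \<subseteq> S0" by simp
        show "length (replicate ?c1 1 @ replicate ?c2 2 @ replicate (?c4-2) 4) + length ([]::nat list) + 2 = m"
          using \<open>length (cs ?c1 ?c2 ?c4) = m\<close> False unfolding cs_def by simp
      qed
      then show ?thesis unfolding xs Phi_pth[OF n4 v sl] using ss False by simp
    qed
  qed
qed

lemma split_sum:
  fixes G :: "nat \<Rightarrow> nat \<Rightarrow> 'k::field"
  assumes "x \<in> S0" "8 < n"
  shows "(\<Sum>p\<in>S0. \<Sum>q\<in>S0. if (p+q) mod n = x then G p q else 0) = (if x = 2 then G 1 1 else if x = 4 then G 2 2 else 0)"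
proof -
  have m: "(1+1) mod n = 2" "(1+2) mod n = 3" "(1+4) mod n = 5" "(2+1) mod n = 3" "(2+2) mod n = 4"
    "(2+4) mod n = 6" "(4+1) mod n = 5" "(4+2) mod n = 6" "(4+4) mod n = (8::nat)"
    using assms(2) by simp_all
  show ?thesis unfolding sum9 m using assms(1) by auto
qed

lemma sum_split_at:
  fixes f :: "nat \<Rightarrow> 'k::field"
  shows "(\<Sum>k<x + y. f k) = (\<Sum>k<x. f k) + (\<Sum>k<y. f (x + k))"
  by (induction y) (simp_all add: add.assoc)

lemma Phi_count4:
  assumes n: "4 < n" and v: "v < n" and sl: "\<forall>s\<in>set \<sigma>. s < n" and c4: "2 \<le> count_list \<sigma> 4"
  shows "Phi n m c (pth n v \<sigma>) = 0"
  unfolding Phi_pth[OF n v sl] using c4 by simp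

definition Gk :: "nat \<Rightarrow> ('k::field) chain \<Rightarrow> nat \<Rightarrow> nat list \<Rightarrow> nat \<Rightarrow> 'k" where
  "Gk n u v \<tau> k = (-1)^(Suc k) * (\<Sum>s\<in>S0. \<Sum>t\<in>S0. if (s+t) mod n = \<tau>!k then u (pth n v (take k \<tau> @ [s,t] @ drop (Suc k) \<tau>)) else 0)"

lemma bdp_Gk:
  assumes n: "4 < n" and su: "suppA n u" and v: "v < n" and tau: "\<forall>s\<in>set \<tau>. 0 < s \<and> s < n"
  shows "bd n u (pth n v \<tau>) = (\<Sum>s\<in>S0. u (pth n ((v+n-s) mod n) (s#\<tau>)))
   + (\<Sum>k<length \<tau>. Gk n u v \<tau> k) + (-1)^(Suc (length \<tau>)) * (\<Sum>s\<in>S0. u (pth n v (\<tau> @ [s])))"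
  unfolding Gk_def by (rule bdp[OF assms])

lemma Gk_left:
  assumes "k < length \<alpha>"
  shows "Gk n u v (\<alpha>@[x,y]@\<beta>) k = (-1)^(Suc k) * (\<Sum>s\<in>S0. \<Sum>t\<in>S0. if (s+t) mod n = \<alpha>!k then
      u (pth n v ((take k \<alpha> @ [s,t] @ drop (Suc k) \<alpha>) @ [x,y] @ \<beta>)) else 0)"
proof -
  have t: "take k (\<alpha>@[x,y]@\<beta>) = take k \<alpha>" using assms by simp
  have d: "drop (Suc k) (\<alpha>@[x,y]@\<beta>) = drop (Suc k) \<alpha> @ [x,y] @ \<beta>" using assms by simp
  have i: "(\<alpha>@[x,y]@\<beta>) ! k = \<alpha>!k" using assms by (simp add: nth_append)
  show ?thesis unfolding Gk_def t d i by (simp only: append_assoc append.simps)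
qed

lemma Gk_right:
  assumes "k < length \<beta>"
  shows "Gk n u v (\<alpha>@[x,y]@\<beta>) (length \<alpha> + 2 + k) = (-1)^(Suc (length \<alpha> + 2 + k)) * (\<Sum>s\<in>S0. \<Sum>t\<in>S0. if (s+t) mod n = \<beta>!k then
      u (pth n v (\<alpha> @ [x,y] @ (take k \<beta> @ [s,t] @ drop (Suc k) \<beta>))) else 0)"
proof -
  have t: "take (length \<alpha> + 2 + k) (\<alpha>@[x,y]@\<beta>) = \<alpha>@[x,y]@take k \<beta>" by simp
  have d: "drop (Suc (length \<alpha> + 2 + k)) (\<alpha>@[x,y]@\<beta>) = drop (Suc k) \<beta>"
    by (simp add: numeral_3_eq_3)
  have i: "(\<alpha>@[x,y]@\<beta>) ! (length \<alpha> + 2 + k) = \<beta>!k" by (simp add: nth_append)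
  show ?thesis unfolding Gk_def t d i by (simp only: append_assoc append.simps)
qed

lemma Gk_mid1: "Gk n u v (\<alpha>@[x,y]@\<beta>) (length \<alpha>) = (-1)^(Suc (length \<alpha>)) * (\<Sum>s\<in>S0. \<Sum>t\<in>S0. if (s+t) mod n = x then
      u (pth n v (\<alpha> @ [s,t,y] @ \<beta>)) else 0)"
  unfolding Gk_def by simp

lemma Gk_mid2: "Gk n u v (\<alpha>@[x,y]@\<beta>) (Suc (length \<alpha>)) = (-1)^(Suc (Suc (length \<alpha>))) * (\<Sum>s\<in>S0. \<Sum>t\<in>S0. if (s+t) mod n = y then
      u (pth n v (\<alpha> @ [x,s,t] @ \<beta>)) else 0)"
  unfolding Gk_def by (simp add: nth_append)

lemma Gk_sum_split:
  fixes f :: "nat \<Rightarrow> 'k::field"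
  shows "(\<Sum>k<length (\<alpha>@[x,y]@\<beta>). f k) = (\<Sum>k<length \<alpha>. f k) + f (length \<alpha>) + f (Suc (length \<alpha>))
     + (\<Sum>k<length \<beta>. f (length \<alpha> + 2 + k))"
proof -
  have "length (\<alpha>@[x,y]@\<beta>) = length \<alpha> + 2 + length \<beta>" by simp
  then have "(\<Sum>k<length (\<alpha>@[x,y]@\<beta>). f k) = (\<Sum>k<length \<alpha> + 2. f k) + (\<Sum>k<length \<beta>. f (length \<alpha> + 2 + k))"
    using sum_split_at[where x="length \<alpha> + 2" and y="length \<beta>" and f=f] by simp
  also have "(\<Sum>k<length \<alpha> + 2. f k) = (\<Sum>k<length \<alpha>. f k) + f (length \<alpha>) + f (Suc (length \<alpha>))"
    by (simp add: numeral_2_eq_2)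
  finally show ?thesis .
qed

lemma S0_lt: "x \<in> S0 \<Longrightarrow> 4 < n \<Longrightarrow> x < n" by auto

lemma setS0_lt: "set \<alpha> \<subseteq> S0 \<Longrightarrow> 4 < n \<Longrightarrow> \<forall>x\<in>set \<alpha>. x < n" by auto

lemma comb5: "A1 = - A2 \<Longrightarrow> C1 = - C2 \<Longrightarrow> L1 = - L2 \<Longrightarrow> R1 = - R2 \<Longrightarrow> Ma + Mb + (Na + Nb) = 0 \<Longrightarrow>
  (A1 + (L1 + Ma + Mb + R1) + z * C1) + (A2 + (L2 + Na + Nb + R2) + z * C2) = (0::'k::field)"
  by (simp add: algebra_simps)

lemma comb0: "A = 0 \<Longrightarrow> C = 0 \<Longrightarrow> L = 0 \<Longrightarrow> R = 0 \<Longrightarrow> Ma + Mb = 0 \<Longrightarrow>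
  A + (L + Ma + Mb + R) + z * C = (0::'k::field)"
  by simp

lemma asym_bd_Phi:
  assumes n: "10 < n"
  shows "asym n m (bd n (Phi n (Suc m) c))"
proof -
  have n4: "4 < n" and n8: "8 < n" using n by auto
  let ?u = "Phi n (Suc m) c"
  have su: "suppA n ?u" by (rule suppA_Phi)
  have Ap: "bd n ?u \<in> Apaths n S0 m"
    using Phi_Omega[OF n, of "Suc m" c] unfolding Omega_def by simp
  have tauS: "\<forall>s\<in>set \<tau>. 0 < s \<and> s < n" if "set \<tau> \<subseteq> S0" for \<tau> using that n by auto
  have P1: "bd n ?u (pth n v (\<alpha>@[s,t]@\<beta>)) = - bd n ?u (pth n v (\<alpha>@[t,s]@\<beta>))"
    if v: "v < n" and ab: "set \<alpha> \<subseteq> S0" "set \<beta> \<subseteq> S0" and st: "s \<in> S0" "t \<in> S0" "s \<noteq> t" for v \<alpha> \<beta> s t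
  proof -
    let ?t1 = "\<alpha>@[s,t]@\<beta>" and ?t2 = "\<alpha>@[t,s]@\<beta>"
    have abl: "\<forall>x\<in>set \<alpha> \<union> set \<beta>. x < n" using ab n4 by auto
    have sl: "s < n" "t < n" using st n4 by auto
    have e1: "bd n ?u (pth n v ?t1) = (\<Sum>r\<in>S0. ?u (pth n ((v+n-r) mod n) (r#?t1)))
      + (\<Sum>k<length ?t1. Gk n ?u v ?t1 k) + (-1)^(Suc (length ?t1)) * (\<Sum>r\<in>S0. ?u (pth n v (?t1 @ [r])))"
      by (rule bdp_Gk[OF n4 su v tauS]) (use ab st in auto)
    have e2: "bd n ?u (pth n v ?t2) = (\<Sum>r\<in>S0. ?u (pth n ((v+n-r) mod n) (r#?t2)))
      + (\<Sum>k<length ?t2. Gk n ?u v ?t2 k) + (-1)^(Suc (length ?t2)) * (\<Sum>r\<in>S0. ?u (pth n v (?t2 @ [r])))"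
      by (rule bdp_Gk[OF n4 su v tauS]) (use ab st in auto)
    have A: "(\<Sum>r\<in>S0. ?u (pth n ((v+n-r) mod n) (r#?t1))) = - (\<Sum>r\<in>S0. ?u (pth n ((v+n-r) mod n) (r#?t2)))"
      unfolding sum_negf[symmetric]
    proof (rule sum.cong[OF refl])
      fix r assume r: "r \<in> S0"
      have "\<forall>x\<in>set (r#\<alpha>) \<union> set \<beta>. x < n" using abl r n4 by auto
      from Phi_antisym[OF n4 _ this sl(1) sl(2) st(3), of "(v+n-r) mod n", where m="Suc m" and c=c] n4
      show "?u (pth n ((v+n-r) mod n) (r#?t1)) = - ?u (pth n ((v+n-r) mod n) (r#?t2))" by simp
    qed
    have C: "(\<Sum>r\<in>S0. ?u (pth n v (?t1 @ [r]))) = - (\<Sum>r\<in>S0. ?u (pth n v (?t2 @ [r])))"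
      unfolding sum_negf[symmetric]
    proof (rule sum.cong[OF refl])
      fix r assume r: "r \<in> S0"
      have "\<forall>x\<in>set \<alpha> \<union> set (\<beta>@[r]). x < n" using abl r n4 by auto
      from Phi_antisym[OF n4 v this sl(1) sl(2) st(3), where m="Suc m" and c=c]
      show "?u (pth n v (?t1 @ [r])) = - ?u (pth n v (?t2 @ [r]))" by simp
    qed
    have L: "(\<Sum>k<length \<alpha>. Gk n ?u v ?t1 k) = - (\<Sum>k<length \<alpha>. Gk n ?u v ?t2 k)"
      unfolding sum_negf[symmetric]
    proof (rule sum.cong[OF refl])
      fix k assume "k \<in> {..<length \<alpha>}"
      then have k: "k < length \<alpha>" by simp
      have pw: "(if (p+q) mod n = \<alpha>!k then ?u (pth n v ((take k \<alpha> @ [p,q] @ drop (Suc k) \<alpha>) @ [s,t] @ \<beta>)) else 0)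
          = - (if (p+q) mod n = \<alpha>!k then ?u (pth n v ((take k \<alpha> @ [p,q] @ drop (Suc k) \<alpha>) @ [t,s] @ \<beta>)) else 0)"
        if pq: "p \<in> S0" "q \<in> S0" for p q
      proof -
        have "\<forall>x\<in>set (take k \<alpha> @ [p,q] @ drop (Suc k) \<alpha>) \<union> set \<beta>. x < n"
          using abl pq n4 by (auto dest: in_set_takeD in_set_dropD)
        from Phi_antisym[OF n4 v this sl(1) sl(2) st(3), where m="Suc m" and c=c] show ?thesis by simp
      qed
      have "(\<Sum>p\<in>S0. \<Sum>q\<in>S0. if (p+q) mod n = \<alpha>!k then ?u (pth n v ((take k \<alpha> @ [p,q] @ drop (Suc k) \<alpha>) @ [s,t] @ \<beta>)) else 0)
        = (\<Sum>p\<in>S0. \<Sum>q\<in>S0. - (if (p+q) mod n = \<alpha>!k then ?u (pth n v ((take k \<alpha> @ [p,q] @ drop (Suc k) \<alpha>) @ [t,s] @ \<beta>)) else 0))"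
        by (intro sum.cong refl pw; assumption)
      then have E2: "(\<Sum>p\<in>S0. \<Sum>q\<in>S0. if (p+q) mod n = \<alpha>!k then ?u (pth n v ((take k \<alpha> @ [p,q] @ drop (Suc k) \<alpha>) @ [s,t] @ \<beta>)) else 0)
        = - (\<Sum>p\<in>S0. \<Sum>q\<in>S0. (if (p+q) mod n = \<alpha>!k then ?u (pth n v ((take k \<alpha> @ [p,q] @ drop (Suc k) \<alpha>) @ [t,s] @ \<beta>)) else 0))"
        by (simp only: sum_negf)
      show "Gk n ?u v ?t1 k = - Gk n ?u v ?t2 k"
        unfolding Gk_left[OF k] E2 by (rule mult_minus_right)
    qed
    have R: "(\<Sum>k<length \<beta>. Gk n ?u v ?t1 (length \<alpha> + 2 + k)) = - (\<Sum>k<length \<beta>. Gk n ?u v ?t2 (length \<alpha> + 2 + k))"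
      unfolding sum_negf[symmetric]
    proof (rule sum.cong[OF refl])
      fix k assume "k \<in> {..<length \<beta>}"
      then have k: "k < length \<beta>" by simp
      have pw: "(if (p+q) mod n = \<beta>!k then ?u (pth n v (\<alpha> @ [s,t] @ (take k \<beta> @ [p,q] @ drop (Suc k) \<beta>))) else 0)
          = - (if (p+q) mod n = \<beta>!k then ?u (pth n v (\<alpha> @ [t,s] @ (take k \<beta> @ [p,q] @ drop (Suc k) \<beta>))) else 0)"
        if pq: "p \<in> S0" "q \<in> S0" for p q
      proof -
        have "\<forall>x\<in>set \<alpha> \<union> set (take k \<beta> @ [p,q] @ drop (Suc k) \<beta>). x < n"
          using abl pq n4 by (auto dest: in_set_takeD in_set_dropD)
        from Phi_antisym[OF n4 v this sl(1) sl(2) st(3), where m="Suc m" and c=c] show ?thesis by simp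
      qed
      have "(\<Sum>p\<in>S0. \<Sum>q\<in>S0. if (p+q) mod n = \<beta>!k then ?u (pth n v (\<alpha> @ [s,t] @ (take k \<beta> @ [p,q] @ drop (Suc k) \<beta>))) else 0)
        = (\<Sum>p\<in>S0. \<Sum>q\<in>S0. - (if (p+q) mod n = \<beta>!k then ?u (pth n v (\<alpha> @ [t,s] @ (take k \<beta> @ [p,q] @ drop (Suc k) \<beta>))) else 0))"
        by (intro sum.cong refl pw; assumption)
      then have E2: "(\<Sum>p\<in>S0. \<Sum>q\<in>S0. if (p+q) mod n = \<beta>!k then ?u (pth n v (\<alpha> @ [s,t] @ (take k \<beta> @ [p,q] @ drop (Suc k) \<beta>))) else 0)
        = - (\<Sum>p\<in>S0. \<Sum>q\<in>S0. (if (p+q) mod n = \<beta>!k then ?u (pth n v (\<alpha> @ [t,s] @ (take k \<beta> @ [p,q] @ drop (Suc k) \<beta>))) else 0))"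
        by (simp only: sum_negf)
      show "Gk n ?u v ?t1 (length \<alpha> + 2 + k) = - Gk n ?u v ?t2 (length \<alpha> + 2 + k)"
        unfolding Gk_right[OF k] E2 by (rule mult_minus_right)
    qed
    let ?SS = "\<lambda>x (G::nat \<Rightarrow> nat \<Rightarrow> 'a). (\<Sum>p\<in>S0. \<Sum>q\<in>S0. if (p+q) mod n = x then G p q else 0)"
    have ds: "?SS x (\<lambda>p q. ?u (pth n v (\<alpha>@[p,q,y]@\<beta>))) = ?SS x (\<lambda>p q. ?u (pth n v (\<alpha>@[y,p,q]@\<beta>)))"
      if "x \<in> S0" "y \<in> S0" for x y
      unfolding split_sum[OF that(1) n8]
      using Phi_dswap[OF n4 v abl, of 1 y] Phi_dswap[OF n4 v abl, of 2 y] that n4 by auto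
    have M: "Gk n ?u v ?t1 (length \<alpha>) + Gk n ?u v ?t1 (Suc (length \<alpha>))
           + (Gk n ?u v ?t2 (length \<alpha>) + Gk n ?u v ?t2 (Suc (length \<alpha>))) = 0"
      unfolding Gk_mid1 Gk_mid2 using ds[OF st(1) st(2)] ds[OF st(2) st(1)]
      by (simp add: algebra_simps)
    have lt: "length ?t2 = length ?t1" by simp
    have "bd n ?u (pth n v ?t1) + bd n ?u (pth n v ?t2) = 0"
      unfolding e1 e2 lt Gk_sum_split by (rule comb5[OF A C L R M])
    then show ?thesis by (simp add: eq_neg_iff_add_eq_0)
  qed
  have P2: "bd n ?u (pth n v (\<alpha>@[4,4]@\<beta>)) = 0"
    if v: "v < n" and ab: "set \<alpha> \<subseteq> S0" "set \<beta> \<subseteq> S0" for v \<alpha> \<beta>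
  proof -
    let ?t = "\<alpha>@[4,4]@\<beta>"
    have abl: "\<forall>x\<in>set \<alpha> \<union> set \<beta>. x < n" using ab n4 by auto
    have e: "bd n ?u (pth n v ?t) = (\<Sum>r\<in>S0. ?u (pth n ((v+n-r) mod n) (r#?t)))
      + (\<Sum>k<length ?t. Gk n ?u v ?t k) + (-1)^(Suc (length ?t)) * (\<Sum>r\<in>S0. ?u (pth n v (?t @ [r])))"
      by (rule bdp_Gk[OF n4 su v tauS]) (use ab in auto)
    have c4: "2 \<le> count_list (\<gamma> @ [4,4] @ \<delta>) 4" for \<gamma> \<delta> :: "nat list" by simp
    have A: "(\<Sum>r\<in>S0. ?u (pth n ((v+n-r) mod n) (r#?t))) = 0"
    proof (rule sum.neutral, rule ballI)
      fix r assume r: "r \<in> S0"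
      have "?u (pth n ((v+n-r) mod n) ((r#\<alpha>) @ [4,4] @ \<beta>)) = 0"
        by (rule Phi_count4[OF n4 _ _ c4]) (use abl r n4 in auto)
      then show "?u (pth n ((v+n-r) mod n) (r#?t)) = 0" by simp
    qed
    have C: "(\<Sum>r\<in>S0. ?u (pth n v (?t @ [r]))) = 0"
    proof (rule sum.neutral, rule ballI)
      fix r assume r: "r \<in> S0"
      have "?u (pth n v (\<alpha> @ [4,4] @ (\<beta>@[r]))) = 0"
        by (rule Phi_count4[OF n4 v _ c4]) (use abl r n4 in auto)
      then show "?u (pth n v (?t @ [r])) = 0" by simp
    qed
    have L: "(\<Sum>k<length \<alpha>. Gk n ?u v ?t k) = 0"
    proof (rule sum.neutral, rule ballI)
      fix k assume "k \<in> {..<length \<alpha>}"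
      then have k: "k < length \<alpha>" by simp
      have "?u (pth n v ((take k \<alpha> @ [p,q] @ drop (Suc k) \<alpha>) @ [4,4] @ \<beta>)) = 0" if "p \<in> S0" "q \<in> S0" for p q
        by (rule Phi_count4[OF n4 v _ c4]) (use abl that n4 in \<open>auto dest: in_set_takeD in_set_dropD\<close>)
      then show "Gk n ?u v ?t k = 0" unfolding Gk_left[OF k] by (auto intro!: sum.neutral)
    qed
    have R: "(\<Sum>k<length \<beta>. Gk n ?u v ?t (length \<alpha> + 2 + k)) = 0"
    proof (rule sum.neutral, rule ballI)
      fix k assume "k \<in> {..<length \<beta>}"
      then have k: "k < length \<beta>" by simp
      have "?u (pth n v (\<alpha> @ [4,4] @ (take k \<beta> @ [p,q] @ drop (Suc k) \<beta>))) = 0" if "p \<in> S0" "q \<in> S0" for p q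
        by (rule Phi_count4[OF n4 v _ c4]) (use abl that n4 in \<open>auto dest: in_set_takeD in_set_dropD\<close>)
      then show "Gk n ?u v ?t (length \<alpha> + 2 + k) = 0" unfolding Gk_right[OF k] by (auto intro!: sum.neutral)
    qed
    have M: "Gk n ?u v ?t (length \<alpha>) + Gk n ?u v ?t (Suc (length \<alpha>)) = 0"
    proof -
      have s1: "(\<Sum>p\<in>S0. \<Sum>q\<in>S0. if (p+q) mod n = 4 then ?u (pth n v (\<alpha>@[p,q,4]@\<beta>)) else 0) = ?u (pth n v (\<alpha>@[2,2,4]@\<beta>))"
        using split_sum[OF _ n8, where x=4 and G="\<lambda>p q. ?u (pth n v (\<alpha>@[p,q,4]@\<beta>))"] by simp
      have s2: "(\<Sum>p\<in>S0. \<Sum>q\<in>S0. if (p+q) mod n = 4 then ?u (pth n v (\<alpha>@[4,p,q]@\<beta>)) else 0) = ?u (pth n v (\<alpha>@[4,2,2]@\<beta>))"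
        using split_sum[OF _ n8, where x=4 and G="\<lambda>p q. ?u (pth n v (\<alpha>@[4,p,q]@\<beta>))"] by simp
      have "?u (pth n v (\<alpha>@[2,2,4]@\<beta>)) = ?u (pth n v (\<alpha>@[4,2,2]@\<beta>))"
        using Phi_dswap[OF n4 v abl, of 2 4] n4 by simp
      then show ?thesis unfolding Gk_mid1 Gk_mid2 s1 s2 by simp
    qed
    show ?thesis unfolding e Gk_sum_split by (rule comb0[OF A C L R M])
  qed
  show ?thesis unfolding asym_def using Ap P1 P2 by blast
qed

lemma ninv_append: "ninv (xs @ ys) = ninv xs + ninv ys + sum_list (map (\<lambda>x. length (filter (\<lambda>y. y < x) ys)) xs)"
  by (induction xs) auto

lemma len_filter_rep: "length (filter P (replicate k x)) = (if P x then k else 0)"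
  by (induction k) auto

lemma ninv_rep[simp]: "ninv (replicate k x) = 0"
  by (induction k) (auto simp: len_filter_rep)

lemma sum_list_map_rep[simp]: "sum_list (map f (replicate k x)) = k * (f x::nat)"
  by (induction k) auto

lemma sum_list_rep_nat[simp]: "sum_list (replicate k (x::nat)) = k * x"
  by (induction k) auto

lemma ninv_cs: "ninv (cs a b e) = 0"
  by (simp add: cs_def ninv_append len_filter_rep)

lemma ninv_cons_cs: "ninv (1 # cs a b e) = 0" "ninv (2 # cs a b e) = a" "ninv (4 # cs a b e) = a + b"
  by (simp_all add: cs_def ninv_append len_filter_rep ninv_cs)

lemma ninv_cs_snoc: "ninv (cs a b e @ [1]) = b + e" "ninv (cs a b e @ [2]) = e" "ninv (cs a b e @ [4]) = 0"
  by (simp_all add: cs_def ninv_append len_filter_rep)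

lemma ninv_mid11: "ninv (replicate a 1 @ replicate i 2 @ [1,1] @ replicate j 2 @ replicate e 4) = 2 * i"
  by (simp add: ninv_append len_filter_rep)

lemma sum3: "(\<Sum>r\<in>S0. f r) = f 1 + f 2 + (f 4 :: 'k::field)"
  by (simp add: algebra_simps)

lemma alt_sum: "(\<Sum>i<b. (-1::'k::field)^i) = (if odd b then 1 else 0)"
  by (induction b) auto

lemma per_sub:
  assumes p: "per n c" and w: "w = nat (v mod int n)" and r: "r \<le> n" and n: "0 < n"
  shows "c (int ((w + n - r) mod n)) = c (v - int r)"
proof -
  have "int ((w + n - r) mod n) = (int w + int n - int r) mod int n"
    using r by (simp add: zmod_int of_nat_diff)
  also have "int w = v mod int n" using w n by simp
  also have "(v mod int n + int n - int r) mod int n = (v - int r) mod int n"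
  proof -
    have "(v mod int n + int n - int r) mod int n = (v mod int n + (int n - int r)) mod int n" by (simp add: algebra_simps)
    also have "\<dots> = (v + (int n - int r)) mod int n" by (rule mod_add_left_eq)
    also have "\<dots> = (v - int r) mod int n"
    proof -
      have e: "v + (int n - int r) = (v - int r) + int n" by simp
      show ?thesis unfolding e by (rule mod_add_self2)
    qed
    finally show ?thesis .
  qed
  finally have "int ((w + n - r) mod n) = (v - int r) mod int n" .
  then show ?thesis using p unfolding per_def by metis
qed

lemma per_w: "per n c \<Longrightarrow> w = nat (v mod int n) \<Longrightarrow> 0 < n \<Longrightarrow> c (int w) = c v"
  unfolding per_def by (metis int_nat_eq mod_int_pos_iff of_nat_0_less_iff order_less_imp_le)

lemma count_cs1'[simp]: "count_list (cs a b e) (Suc 0) = a"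
  using count_cs1 by simp

lemma ninv_S0_extra: "ninv (Suc 0 # cs a b e) = 0" "ninv (cs a b e @ [Suc 0]) = b + e"
  using ninv_cons_cs(1) ninv_cs_snoc(1) by simp_all

lemma cs_nth_lt: "k < a \<Longrightarrow> cs a b e ! k = 1"
  by (simp add: cs_def nth_append)

lemma cs_mid: "i < b \<Longrightarrow> cs a b e ! (a+i) = 2 \<and> take (a+i) (cs a b e) = replicate a 1 @ replicate i 2
   \<and> drop (Suc (a+i)) (cs a b e) = replicate (b - Suc i) 2 @ replicate e 4"
  by (simp add: cs_def nth_append)

lemma cs_last: "cs a b 1 ! (a+b) = 4 \<and> take (a+b) (cs a b 1) = replicate a 1 @ replicate b 2
   \<and> drop (Suc (a+b)) (cs a b 1) = []"
  by (simp add: cs_def nth_append)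

lemma T3s:
  assumes n: "10 < n" and p: "per n c" and cl: "cell m a b e"
  shows "Psi n (bd n (Phi n (Suc m) c)) v a b e = Dc c v a b e"
proof -
  have n4: "4 < n" and n8: "8 < n" and n0: "0 < n" using n by auto
  define w where "w = nat (v mod int n)"
  have w: "w < n" unfolding w_def using n0
    by (metis nat_less_iff of_nat_0_less_iff pos_mod_bound pos_mod_sign)
  have cw: "c (int w) = c v" by (rule per_w[OF p w_def n0])
  have cws: "c (int ((w + n - r) mod n)) = c (v - int r)" if "r \<le> n" for r
    by (rule per_sub[OF p w_def that n0])
  let ?u = "Phi n (Suc m) c"
  let ?\<tau> = "cs a b e"
  have m: "a + b + e = m" "e \<le> 1" using cl unfolding cell_def by auto
  have tauS: "\<forall>s\<in>set ?\<tau>. 0 < s \<and> s < n" using set_cs[of a b e] n by auto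
  have sl: "\<forall>s\<in>set (r # ?\<tau>). s < n" "\<forall>s\<in>set (?\<tau> @ [r]). s < n" if "r \<in> S0" for r
    using set_cs[of a b e] that n by auto
  have e0: "Psi n (bd n ?u) v a b e = bd n ?u (pth n w ?\<tau>)" unfolding Psi_def w_def by simp
  have E: "bd n ?u (pth n w ?\<tau>) = (\<Sum>s\<in>S0. ?u (pth n ((w+n-s) mod n) (s#?\<tau>)))
   + (\<Sum>k<length ?\<tau>. Gk n ?u w ?\<tau> k) + (-1)^(Suc (length ?\<tau>)) * (\<Sum>s\<in>S0. ?u (pth n w (?\<tau> @ [s])))"
    by (rule bdp_Gk[OF n4 suppA_Phi w tauS])
  have wl: "(w + n - r) mod n < n" for r using n0 by simp
  have A: "(\<Sum>s\<in>S0. ?u (pth n ((w+n-s) mod n) (s#?\<tau>))) =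
     c (v-1) (a+1) b e + (-1)^a * c (v-2) a (b+1) e + (if e = 0 then (-1)^(a+b) * c (v-4) a b 1 else 0)"
  proof -
    have a1: "?u (pth n ((w+n-1) mod n) (1#?\<tau>)) = c (v-1) (a+1) b e"
      using Phi_pth[OF n4 wl sl(1)[of 1], of "Suc m" c] m set_cs[of a b e] cws[of 1] n4 by (simp del: ninv.simps add: ninv_cons_cs ninv_S0_extra)
    have a2: "?u (pth n ((w+n-2) mod n) (2#?\<tau>)) = (-1)^a * c (v-2) a (b+1) e"
      using Phi_pth[OF n4 wl sl(1)[of 2], of "Suc m" c] m set_cs[of a b e] cws[of 2] n4 by (simp del: ninv.simps add: ninv_cons_cs ninv_S0_extra)
    have a4: "?u (pth n ((w+n-4) mod n) (4#?\<tau>)) = (if e = 0 then (-1)^(a+b) * c (v-4) a b 1 else 0)"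
      using Phi_pth[OF n4 wl sl(1)[of 4], of "Suc m" c] m set_cs[of a b e] cws[of 4] n4 by (simp del: ninv.simps add: ninv_cons_cs ninv_S0_extra)
    show ?thesis unfolding sum3 a1 a2 a4 by simp
  qed
  have C: "(\<Sum>s\<in>S0. ?u (pth n w (?\<tau> @ [s]))) =
     (-1)^(b+e) * c v (a+1) b e + (-1)^e * c v a (b+1) e + (if e = 0 then c v a b 1 else 0)"
  proof -
    have a1: "?u (pth n w (?\<tau> @ [1])) = (-1)^(b+e) * c v (a+1) b e"
      using Phi_pth[OF n4 w sl(2)[of 1], of "Suc m" c] m set_cs[of a b e] cw n4 by (simp del: ninv.simps add: ninv_cs_snoc count_list_append ninv_S0_extra)
    have a2: "?u (pth n w (?\<tau> @ [2])) = (-1)^e * c v a (b+1) e"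
      using Phi_pth[OF n4 w sl(2)[of 2], of "Suc m" c] m set_cs[of a b e] cw n4 by (simp del: ninv.simps add: ninv_cs_snoc count_list_append ninv_S0_extra)
    have a4: "?u (pth n w (?\<tau> @ [4])) = (if e = 0 then c v a b 1 else 0)"
      using Phi_pth[OF n4 w sl(2)[of 4], of "Suc m" c] m set_cs[of a b e] cw n4 by (simp del: ninv.simps add: ninv_cs_snoc count_list_append ninv_S0_extra)
    show ?thesis unfolding sum3 a1 a2 a4 by simp
  qed
  have ss1: "(\<Sum>p\<in>S0. \<Sum>q\<in>S0. if (p+q) mod n = 1 then G p q else 0) = 0" for G :: "nat \<Rightarrow> nat \<Rightarrow> 'a"
    using split_sum[of 1 n G] n8 by simp
  have ss2: "(\<Sum>p\<in>S0. \<Sum>q\<in>S0. if (p+q) mod n = 2 then G p q else 0) = G 1 1" for G :: "nat \<Rightarrow> nat \<Rightarrow> 'a"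
    using split_sum[of 2 n G] n8 by simp
  have ss4: "(\<Sum>p\<in>S0. \<Sum>q\<in>S0. if (p+q) mod n = 4 then G p q else 0) = G 2 2" for G :: "nat \<Rightarrow> nat \<Rightarrow> 'a"
    using split_sum[of 4 n G] n8 by simp
  have G1: "Gk n ?u w ?\<tau> k = 0" if "k < a" for k
    unfolding Gk_def cs_nth_lt[OF that] ss1 by simp
  have G2: "Gk n ?u w ?\<tau> (a+i) = (-1)^(Suc (a+i)) * c v (a+2) (b-1) e" if "i < b" for i
  proof -
    have cm: "?\<tau> ! (a+i) = 2" "take (a+i) ?\<tau> = replicate a 1 @ replicate i 2"
      "drop (Suc (a+i)) ?\<tau> = replicate (b - Suc i) 2 @ replicate e 4" using cs_mid[OF that] by auto
    have sl': "\<forall>s\<in>set ((replicate a 1 @ replicate i 2) @ [1,1] @ replicate (b - Suc i) 2 @ replicate e 4). s < n"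
      using n by auto
    have "?u (pth n w ((replicate a 1 @ replicate i 2) @ [1,1] @ replicate (b - Suc i) 2 @ replicate e 4))
        = c v (a+2) (b-1) e"
      unfolding Phi_pth[OF n4 w sl'] using m that cw ninv_mid11[of a i "b - Suc i" e]
      by (auto simp: count_list_append count_rep_same count_rep_other)
    then show ?thesis unfolding Gk_def cm ss2 by simp
  qed
  have G3: "Gk n ?u w ?\<tau> (a+b) = (-1)^(Suc (a+b)) * c v a (b+2) 0" if "e = 1"
  proof -
    have cm: "?\<tau> ! (a+b) = 4" "take (a+b) ?\<tau> = replicate a 1 @ replicate b 2"
      "drop (Suc (a+b)) ?\<tau> = []" using cs_last that by auto
    have sl': "\<forall>s\<in>set ((replicate a 1 @ replicate b 2) @ [2,2] @ []). s < n"
      using n by auto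
    have "?u (pth n w ((replicate a 1 @ replicate b 2) @ [2,2] @ [])) = c v a (b+2) 0"
      unfolding Phi_pth[OF n4 w sl'] using m that cw ninv_mid11[of a b 0 0]
      by (auto simp: count_list_append count_rep_same count_rep_other ninv_append len_filter_rep)
    then show ?thesis unfolding Gk_def cm ss4 by simp
  qed
  have B: "(\<Sum>k<length ?\<tau>. Gk n ?u w ?\<tau> k) =
     (if odd b then (-1)^(Suc a) * c v (a+2) (b-1) e else 0) + (if e = 1 then (-1)^(Suc (a+b)) * c v a (b+2) 0 else 0)"
  proof -
    have "(\<Sum>k<length ?\<tau>. Gk n ?u w ?\<tau> k) = (\<Sum>k<a. Gk n ?u w ?\<tau> k) + (\<Sum>i<b. Gk n ?u w ?\<tau> (a+i))
        + (\<Sum>i<e. Gk n ?u w ?\<tau> (a+b+i))"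
      using sum_split_at[where x="a+b" and y=e and f="Gk n ?u w ?\<tau>"]
        sum_split_at[where x=a and y=b and f="Gk n ?u w ?\<tau>"] by simp
    also have "(\<Sum>k<a. Gk n ?u w ?\<tau> k) = 0" using G1 by simp
    also have "(\<Sum>i<b. Gk n ?u w ?\<tau> (a+i)) = (\<Sum>i<b. (-1)^(Suc a) * ((-1)^i * c v (a+2) (b-1) e))"
      using G2 by (simp add: power_add mult.assoc)
    also have "\<dots> = (-1)^(Suc a) * ((\<Sum>i<b. (-1)^i) * c v (a+2) (b-1) e)"
      by (simp add: sum_distrib_left sum_distrib_right)
    also have "\<dots> = (if odd b then (-1)^(Suc a) * c v (a+2) (b-1) e else 0)"
      unfolding alt_sum by simp
    also have "(\<Sum>i<e. Gk n ?u w ?\<tau> (a+b+i)) = (if e = 1 then (-1)^(Suc (a+b)) * c v a (b+2) 0 else 0)"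
    proof (cases "e = 1")
      case True then show ?thesis using G3 by simp
    next
      case False then have "e = 0" using m by simp
      then show ?thesis by simp
    qed
    finally show ?thesis by simp
  qed
  have sq: "(-1::'a)^x * (-1)^x = 1" for x by (simp add: power_add[symmetric])
  show ?thesis
    unfolding e0 E A B C
  proof (cases "e = 0")
    case True
    then show "c (v-1) (a+1) b e + (-1)^a * c (v-2) a (b+1) e + (if e = 0 then (-1)^(a+b) * c (v-4) a b 1 else 0)
     + ((if odd b then (-1)^(Suc a) * c v (a+2) (b-1) e else 0) + (if e = 1 then (-1)^(Suc (a+b)) * c v a (b+2) 0 else 0))
     + (-1)^(Suc (length ?\<tau>)) * ((-1)^(b+e) * c v (a+1) b e + (-1)^e * c v a (b+1) e + (if e = 0 then c v a b 1 else 0))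
     = Dc c v a b e"
      unfolding Dc_def using m(2) m(1)[symmetric]
      by (cases "even a"; cases "even b") (simp_all add: algebra_simps power_add neg_one_even_power neg_one_odd_power)
  next
    case False
    then have e1: "e = 1" using m by simp
    then show "c (v-1) (a+1) b e + (-1)^a * c (v-2) a (b+1) e + (if e = 0 then (-1)^(a+b) * c (v-4) a b 1 else 0)
     + ((if odd b then (-1)^(Suc a) * c v (a+2) (b-1) e else 0) + (if e = 1 then (-1)^(Suc (a+b)) * c v a (b+2) 0 else 0))
     + (-1)^(Suc (length ?\<tau>)) * ((-1)^(b+e) * c v (a+1) b e + (-1)^e * c v a (b+1) e + (if e = 0 then c v a b 1 else 0))
     = Dc c v a b e"
      unfolding Dc_def using m(2) m(1)[symmetric]
      by (cases "even a"; cases "even b") (simp_all add: algebra_simps power_add neg_one_even_power neg_one_odd_power)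
  qed
qed

lemma Psi_per: "per n (Psi n u)"
  unfolding per_def Psi_def by simp

lemma Psi_Phi:
  assumes n: "10 < n" and p: "per n c" and cl: "cell m a b e"
  shows "Psi n (Phi n m c) v a b e = c v a b e"
proof -
  have n4: "4 < n" and n0: "0 < n" using n by auto
  define w where "w = nat (v mod int n)"
  have w: "w < n" unfolding w_def using n0
    by (metis nat_less_iff of_nat_0_less_iff pos_mod_bound pos_mod_sign)
  have cw: "c (int w) = c v" by (rule per_w[OF p w_def n0])
  have sl: "\<forall>s\<in>set (cs a b e). s < n" using set_cs[of a b e] n by auto
  show ?thesis unfolding Psi_def w_def[symmetric] Phi_pth[OF n4 w sl]
    using cl set_cs[of a b e] cw unfolding cell_def by (simp add: ninv_cs)
qed

lemma Phi_cong:
  assumes n: "4 < n" and eq: "\<And>v a b e. cell m a b e \<Longrightarrow> c v a b e = c' v a b e"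
  shows "Phi n m c = Phi n m c'"
proof
  fix xs
  show "Phi n m c xs = Phi n m c' xs"
  proof (cases "xs \<noteq> [] \<and> set xs \<subseteq> {..<n} \<and> length xs = Suc m \<and> allowed_path n S0 xs \<and> count_list (stp n xs) 4 \<le> 1")
    case True
    then have s: "set (stp n xs) \<subseteq> S0" using allowed_decomp[of xs n] n by auto
    have l: "length (stp n xs) = m" using True by (simp add: length_stp)
    have "cell m (count_list (stp n xs) 1) (count_list (stp n xs) 2) (count_list (stp n xs) 4)"
      unfolding cell_def using count_sum[OF s] l True by simp
    then show ?thesis using eq unfolding Phi_def if_P[OF True] by simp
  next
    case False then show ?thesis unfolding Phi_def if_not_P[OF False] by simp
  qed
qed

lemma bd_Phi:
  assumes n: "10 < n" and p: "per n c"
  shows "bd n (Phi n (Suc m) c) = Phi n m (Dc c)"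
proof -
  have "bd n (Phi n (Suc m) c) = Phi n m (Psi n (bd n (Phi n (Suc m) c)))"
    by (rule asym_Phi_Psi[OF n asym_bd_Phi[OF n], symmetric])
  also have "\<dots> = Phi n m (Dc c)"
    by (rule Phi_cong) (use n T3s[OF n p] in auto)
  finally show ?thesis .
qed

lemma Omega_char:
  assumes n: "10 < n"
  shows "u \<in> Omega n S0 m \<longleftrightarrow> (\<exists>c. per n c \<and> u = Phi n m c)"
proof
  assume u: "u \<in> Omega n S0 m"
  have "Phi n m (Psi n u) = u" by (rule asym_Phi_Psi[OF n Omega_asym[OF n u]])
  then show "\<exists>c. per n c \<and> u = Phi n m c" using Psi_per by metis
next
  assume "\<exists>c. per n c \<and> u = Phi n m c"
  then show "u \<in> Omega n S0 m" using Phi_Omega[OF n] by auto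
qed

lemma Phi_eq_iff:
  assumes n: "10 < n" and p: "per n c" "per n c'"
  shows "Phi n m c = Phi n m c' \<longleftrightarrow> (\<forall>v a b e. cell m a b e \<longrightarrow> c v a b e = c' v a b e)"
proof
  assume "Phi n m c = Phi n m c'"
  then show "\<forall>v a b e. cell m a b e \<longrightarrow> c v a b e = c' v a b e"
    using Psi_Phi[OF n p(1)] Psi_Phi[OF n p(2)] by metis
next
  assume "\<forall>v a b e. cell m a b e \<longrightarrow> c v a b e = c' v a b e"
  then show "Phi n m c = Phi n m c'" using n by (intro Phi_cong) auto
qed

lemma Phi_lin: "Phi n m (\<lambda>v a b e. c v a b e - k * d v a b e) = (\<lambda>xs. Phi n m c xs - k * Phi n m d xs)"
  by (rule ext) (simp add: Phi_def algebra_simps)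

lemma Phi_add: "Phi n m (\<lambda>v a b e. c v a b e + d v a b e) = (\<lambda>xs. Phi n m c xs + Phi n m d xs)"
  by (rule ext) (simp add: Phi_def algebra_simps)

lemma Phi_smult: "Phi n m (\<lambda>v a b e. k * c v a b e) = (\<lambda>xs. k * Phi n m c xs)"
  by (rule ext) (simp add: Phi_def algebra_simps)

lemma Phi_zero: "Phi n m (\<lambda>v a b e. 0) = (\<lambda>xs. 0)"
  by (rule ext) (simp add: Phi_def)

lemma int_mod_diff: "a < n \<Longrightarrow> b \<le> n \<Longrightarrow> int ((a + n - b) mod n) = (int a - int b) mod int n"
proof -
  assume ab: "a < n" "b \<le> n"
  have "int ((a + n - b) mod n) = (int a + int n - int b) mod int n"
    using ab by (simp add: zmod_int of_nat_diff)
  also have "int a + int n - int b = (int a - int b) + int n" by simp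
  also have "((int a - int b) + int n) mod int n = (int a - int b) mod int n" by (rule mod_add_self2)
  finally show ?thesis .
qed

definition sh :: "nat \<Rightarrow> nat \<Rightarrow> nat" where "sh n v = (v + n - 1) mod n"

lemma sh_lt: "0 < n \<Longrightarrow> sh n v < n" unfolding sh_def by simp

lemma sh_int: "v < n \<Longrightarrow> int (sh n v) = (int v - 1) mod int n"
  unfolding sh_def using int_mod_diff[of v n 1] by simp

lemma stp_map_sh: "set ys \<subseteq> {..<n} \<Longrightarrow> stp n (map (sh n) ys) = stp n ys"
proof (induction n ys rule: stp.induct)
  case (1 n x y r)
  have xy: "x < n" "y < n" using 1(2) by auto
  have "int ((sh n y + n - sh n x) mod n) = (int (sh n y) - int (sh n x)) mod int n"
  proof -
    have n0: "0 < n" using xy by simp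
    have "sh n x \<le> n" using sh_lt[OF n0, of x] by simp
    then show ?thesis using int_mod_diff[OF sh_lt[OF n0]] by blast
  qed
  also have "\<dots> = ((int y - 1) mod int n - (int x - 1) mod int n) mod int n"
    using sh_int xy by simp
  also have "\<dots> = ((int y - 1) - (int x - 1)) mod int n" by (rule mod_diff_eq)
  also have "\<dots> = (int y - int x) mod int n" by simp
  also have "\<dots> = int ((y + n - x) mod n)" using int_mod_diff[of y n x] xy by simp
  finally have "(sh n y + n - sh n x) mod n = (y + n - x) mod n" by simp
  then show ?case using 1 by simp
qed auto

lemma allowed_iff_stp:
  assumes "ys \<noteq> []" "set ys \<subseteq> {..<n}" "4 < n"
  shows "allowed_path n S0 ys \<longleftrightarrow> set (stp n ys) \<subseteq> S0"
proof -
  have e: "ys = pth n (hd ys) (stp n ys)" using pth_stp assms by blast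
  have h: "hd ys < n" using assms by (cases ys) auto
  have "\<forall>s\<in>set (stp n ys). s < n" using set_stp_lt assms by simp
  then show ?thesis using allowed_pth[OF h _ assms(3)] e by metis
qed

lemma tau_Phi:
  assumes n: "10 < n" and p: "per n c"
  shows "tau n (Phi n m c) = Phi n m (\<lambda>v. c (v - 1))"
proof
  fix ys
  have n4: "4 < n" and n0: "0 < n" using n by auto
  show "tau n (Phi n m c) ys = Phi n m (\<lambda>v. c (v - 1)) ys"
  proof (cases "set ys \<subseteq> {..<n} \<and> ys \<noteq> []")
    case False
    then show ?thesis unfolding tau_def Phi_def by auto
  next
    case True
    have mr: "map (\<lambda>v. (v + n - 1) mod n) ys = map (sh n) ys" unfolding sh_def by simp
    have ms: "set (map (sh n) ys) \<subseteq> {..<n}" using sh_lt n0 by auto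
    have mne: "map (sh n) ys \<noteq> []" using True by simp
    have st: "stp n (map (sh n) ys) = stp n ys" using stp_map_sh True by blast
    have al: "allowed_path n S0 (map (sh n) ys) \<longleftrightarrow> allowed_path n S0 ys"
      using allowed_iff_stp[OF mne ms n4] allowed_iff_stp[of ys n] True n4 st by simp
    have h: "hd (map (sh n) ys) = sh n (hd ys)" using True by (cases ys) auto
    have hl: "hd ys < n" using True by (cases ys) auto
    have ch: "c (int (sh n (hd ys))) = c (int (hd ys) - 1)"
      using sh_int[OF hl] p unfolding per_def by metis
    show ?thesis unfolding tau_def mr Phi_def st al h using True ms ch by simp
  qed
qed

definition ceq :: "nat \<Rightarrow> ('k::field) coef \<Rightarrow> 'k coef \<Rightarrow> bool" where
  "ceq m c d \<longleftrightarrow> (\<forall>v a b e. cell m a b e \<longrightarrow> c v a b e = d v a b e)"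

definition eig :: "'k::field \<Rightarrow> nat \<Rightarrow> 'k coef \<Rightarrow> bool" where
  "eig lam m c \<longleftrightarrow> (\<forall>v a b e. cell m a b e \<longrightarrow> c (v-1) a b e = lam * c v a b e)"

lemma Dc_diff: "Dc (\<lambda>v a b e. w v a b e - d v a b e) = (\<lambda>v a b e. Dc w v a b e - Dc d v a b e)"
  by (intro ext) (simp add: Dc_def algebra_simps)

lemma Dc_smult: "Dc (\<lambda>v a b e. k * w v a b e) = (\<lambda>v a b e. k * Dc w v a b e)"
  by (intro ext) (simp add: Dc_def algebra_simps)

lemma per_diff: "per n c \<Longrightarrow> per n d \<Longrightarrow> per n (\<lambda>v a b e. c v a b e - d v a b e)"
  unfolding per_def by metis

lemma K2:
  assumes m2: "2 \<le> m" and p: "per n c" and cyc: "ceq (m-1) (Dc c) (\<lambda>v a b e. 0)"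
  shows "\<exists>w. per n w \<and> ceq m c (Dc w)"
proof -
  obtain w where pw: "per n w" and hw: "\<forall>v a b e. cell m a b e \<longrightarrow> Ucell a b e \<longrightarrow> c v a b e = Dc w v a b e"
    using lemR[OF p] by blast
  define c' where "c' = (\<lambda>v a b e. c v a b e - Dc w v a b e)"
  have U0: "c' v a b e = 0" if "cell m a b e" "Ucell a b e" for v a b e
    using hw that unfolding c'_def by simp
  have cy: "Dc c' v a b e = 0" if "cell (m-1) a b e" for v a b e
    using cyc that DD[of w v a b e] unfolding c'_def Dc_diff ceq_def by simp
  have "c' v a b e = 0" if "cell m a b e" for v a b e
    using lemC[OF m2 U0 cy that] by blast
  then have "ceq m c (Dc w)" unfolding ceq_def c'_def by simp
  then show ?thesis using pw by blast
qed

lemma per_mod_eq: "per n f \<Longrightarrow> f v = f (v mod int n)"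
  unfolding per_def by simp

lemma const_from_shift:
  assumes p: "\<forall>v. f v = f (v mod int n)" and s: "\<forall>v. f (v - 1) = f v" and n: "0 < n"
  shows "f v = f 0"
proof -
  have "f (int k) = f 0" for k
  proof (induction k)
    case 0 then show ?case by simp
  next
    case (Suc k)
    have "f (int (Suc k)) = f (int (Suc k) - 1)" using s by metis
    then show ?case using Suc by simp
  qed
  moreover have "v mod int n = int (nat (v mod int n))" using n by simp
  ultimately show ?thesis using p by metis
qed

definition z1c :: "('k::field) coef" where
  "z1c v a b e = (if a = 1 \<and> b = 0 \<and> e = 0 then 1 else 0)"

lemma per_z1c: "per n z1c" unfolding per_def z1c_def by simp

lemma K1:
  assumes n: "0 < n" and p: "per n c" and cyc: "\<forall>v. Dc c v 0 0 0 = 0"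
  shows "\<exists>w k. per n w \<and> ceq 1 c (\<lambda>v a b e. k * z1c v a b e + Dc w v a b e)"
proof -
  obtain w where pw: "per n w" and hw: "\<forall>v a b e. cell 1 a b e \<longrightarrow> Ucell a b e \<longrightarrow> c v a b e = Dc w v a b e"
    using lemR[OF p] by blast
  define c' where "c' = (\<lambda>v a b e. c v a b e - Dc w v a b e)"
  have pc': "per n c'" unfolding c'_def by (rule per_diff[OF p per_Dc[OF pw]])
  have z010: "c' v 0 1 0 = 0" for v using hw unfolding c'_def cell_def Ucell_def by simp
  have z001: "c' v 0 0 1 = 0" for v using hw unfolding c'_def cell_def Ucell_def by simp
  have cy: "Dc c' v 0 0 0 = 0" for v
    using cyc DD[of w v 0 0 0] unfolding c'_def Dc_diff by simp
  have sh: "c' (v - 1) 1 0 0 = c' v 1 0 0" for v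
    using cy[of v] z010 z001 unfolding Dc_def by simp
  define f where "f = (\<lambda>v. c' v 1 0 0)"
  have pf: "\<forall>v. f v = f (v mod int n)" using pc' unfolding per_def f_def by metis
  have const: "f v = f 0" for v by (rule const_from_shift[OF pf _ n]) (use sh f_def in auto)
  have "ceq 1 c (\<lambda>v a b e. f 0 * z1c v a b e + Dc w v a b e)"
    unfolding ceq_def
  proof (intro allI impI)
    fix v a b e assume cl: "cell 1 a b e"
    then consider "a = 1 \<and> b = 0 \<and> e = 0" | "a = 0 \<and> b = 1 \<and> e = 0" | "a = 0 \<and> b = 0 \<and> e = 1"
      unfolding cell_def by arith
    then show "c v a b e = f 0 * z1c v a b e + Dc w v a b e"
    proof cases
      case 1 then show ?thesis using const[of v] unfolding f_def c'_def z1c_def by (simp add: algebra_simps)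
    next
      case 2 then show ?thesis using z010[of v] unfolding c'_def z1c_def by simp
    next
      case 3 then show ?thesis using z001[of v] unfolding c'_def z1c_def by simp
    qed
  qed
  then show ?thesis using pw by blast
qed

definition z0c :: "nat \<Rightarrow> ('k::field) coef" where
  "z0c n v a b e = (if v mod int n = 0 then 1 else 0)"

lemma per_z0c: "per n (z0c n)" unfolding per_def z0c_def by simp

lemma K0:
  assumes n: "0 < n" and p: "per n c"
  shows "\<exists>w. per n w \<and> (\<forall>v. c v 0 0 0 = (\<Sum>k<n. c (int k) 0 0 0) * z0c n v 0 0 0 + Dc w v 0 0 0)"
proof -
  define g where "g = (\<lambda>r::nat. - (\<Sum>k\<le>r. c (int k) 0 0 0))"
  define w :: "'a coef" where "w = (\<lambda>v a b e. if a = 1 \<and> b = 0 \<and> e = 0 then g (nat (v mod int n)) else 0)"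
  have pw: "per n w" unfolding per_def w_def by (simp add: fun_eq_iff)
  have "c v 0 0 0 = (\<Sum>k<n. c (int k) 0 0 0) * z0c n v 0 0 0 + Dc w v 0 0 0" for v
  proof -
    have D: "Dc w v 0 0 0 = w (v-1) 1 0 0 - w v 1 0 0" unfolding Dc_def w_def by simp
    define r where "r = nat (v mod int n)"
    have rl: "r < n" unfolding r_def using n by (metis nat_less_iff of_nat_0_less_iff pos_mod_bound pos_mod_sign)
    have rv: "int r = v mod int n" unfolding r_def using n by simp
    have cv: "c v 0 0 0 = c (int r) 0 0 0" using p rv unfolding per_def by metis
    show ?thesis
    proof (cases "r = 0")
      case True
      have vm: "(v - 1) mod int n = int n - 1"
      proof -
        have "(v - 1) mod int n = (v mod int n - 1) mod int n" by (simp add: mod_diff_left_eq)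
        also have "v mod int n = 0" using True rv by simp
        also have "(0 - 1) mod int n = int n - 1" using n by (simp add: zmod_minus1)
        finally show ?thesis .
      qed
      have "nat ((v-1) mod int n) = n - 1" using vm n by simp
      moreover have "{..n-1} = {..<n}" using n by auto
      ultimately have w1: "w (v-1) 1 0 0 = - (\<Sum>k<n. c (int k) 0 0 0)"
        unfolding w_def g_def by simp
      have w0: "w v 1 0 0 = - c 0 0 0 0" unfolding w_def g_def r_def[symmetric] using True by simp
      have z: "z0c n v 0 0 0 = 1" unfolding z0c_def using True rv by simp
      show ?thesis unfolding D w1 w0 z cv using True by simp
    next
      case False
      have vm: "nat ((v - 1) mod int n) = r - 1"
      proof -
        have "(v - 1) mod int n = (v mod int n - 1) mod int n" by (simp add: mod_diff_left_eq)
        also have "\<dots> = int r - 1" using rv False rl by simp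
        finally show ?thesis using False by simp
      qed
      have w1: "w (v-1) 1 0 0 = g (r - 1)" unfolding w_def vm by simp
      have w0: "w v 1 0 0 = g r" unfolding w_def r_def by simp
      have "g (r - 1) - g r = c (int r) 0 0 0"
      proof -
        have "r = Suc (r - 1)" using False by simp
        then have "(\<Sum>k\<le>r. c (int k) 0 0 0) = (\<Sum>k\<le>r-1. c (int k) 0 0 0) + c (int r) 0 0 0"
          by (metis sum.atMost_Suc)
        then show ?thesis unfolding g_def by simp
      qed
      moreover have z: "z0c n v 0 0 0 = 0" unfolding z0c_def using False rv by simp
      ultimately show ?thesis unfolding D w1 w0 z cv by simp
    qed
  qed
  then show ?thesis using pw by blast
qed

lemma sum_shift:
  assumes p: "\<forall>v. f v = f (v mod int n)" and n: "0 < n"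
  shows "(\<Sum>k<n. f (int k + s)) = (\<Sum>k<n. (f (int k) :: 'k::field))"
proof -
  define h where "h = (\<lambda>k::nat. nat ((int k + s) mod int n))"
  have hl: "h ` {..<n} \<subseteq> {..<n}" unfolding h_def using n
    by (auto simp: nat_less_iff)
  have inj: "inj_on h {..<n}"
  proof (rule inj_onI)
    fix k k' assume kk: "k \<in> {..<n}" "k' \<in> {..<n}" "h k = h k'"
    moreover have "0 \<le> (int k + s) mod int n" "0 \<le> (int k' + s) mod int n" using n by simp_all
    ultimately have "(int k + s) mod int n = (int k' + s) mod int n" unfolding h_def
      using eq_nat_nat_iff by blast
    then have "int n dvd (int k + s) - (int k' + s)" by (simp add: mod_eq_dvd_iff)
    then have "int n dvd int k - int k'" by simp
    moreover have "\<bar>int k - int k'\<bar> < int n" using kk by auto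
    ultimately have "int k - int k' = 0" using dvd_small_int by blast
    then show "k = k'" by simp
  qed
  have im: "h ` {..<n} = {..<n}" using endo_inj_surj[OF _ hl inj] by simp
  have "(\<Sum>k<n. f (int k + s)) = (\<Sum>k<n. f (int (h k)))"
  proof (rule sum.cong[OF refl])
    fix k assume "k \<in> {..<n}"
    have "int (h k) = (int k + s) mod int n" unfolding h_def using n by simp
    then show "f (int k + s) = f (int (h k))" using p by metis
  qed
  also have "\<dots> = (\<Sum>j\<in>h ` {..<n}. f (int j))" by (rule sum.reindex[OF inj, symmetric, unfolded comp_def])
  also have "\<dots> = (\<Sum>k<n. f (int k))" using im by simp
  finally show ?thesis .
qed

lemma sum_shift_per:
  assumes p: "per n w" and n: "0 < n"
  shows "(\<Sum>k<n. w (int k - s) a b e) = (\<Sum>k<n. (w (int k) a b e :: 'k::field))"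
proof -
  have "\<forall>v. w v a b e = w (v mod int n) a b e" using p unfolding per_def by metis
  from sum_shift[OF this n, of "-s"] show ?thesis by simp
qed

lemma N0:
  assumes p: "per n w" and n: "0 < n"
  shows "(\<Sum>k<n. Dc w (int k) 0 0 0) = (0::'k::field)"
  unfolding Dc_def
  by (simp add: sum.distrib sum_subtractf sum_shift_per[OF p n])

lemma N1:
  assumes p: "per n w" and n: "0 < n"
  shows "(\<Sum>k<n. Dc w (int k) 1 0 0 + 2 * Dc w (int k) 0 1 0 + 4 * Dc w (int k) 0 0 1) = (0::'k::field)"
proof -
  have d1: "Dc w v 1 0 0 = w (v-1) 2 0 0 + w v 2 0 0 - w (v-2) 1 1 0 + w v 1 1 0 - w (v-4) 1 0 1 + w v 1 0 1" for v
    by (simp add: Dc_def numeral_2_eq_2)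
  have d2: "Dc w v 0 1 0 = w (v-1) 1 1 0 - w v 1 1 0 + w (v-2) 0 2 0 + w v 0 2 0 - w (v-4) 0 1 1 + w v 0 1 1 - w v 2 0 0" for v
    by (simp add: Dc_def numeral_2_eq_2)
  have d3: "Dc w v 0 0 1 = w (v-1) 1 0 1 - w v 1 0 1 + w (v-2) 0 1 1 - w v 0 1 1 - w v 0 2 0" for v
    by (simp add: Dc_def numeral_2_eq_2)
  show ?thesis unfolding d1 d2 d3
    by (simp only: sum.distrib sum_subtractf sum_distrib_left[symmetric] distrib_left right_diff_distrib
        sum_shift_per[OF p n]) (simp add: algebra_simps)
qed

definition avg :: "'k::field \<Rightarrow> nat \<Rightarrow> 'k coef \<Rightarrow> 'k coef" where
  "avg lam n w v a b e = (\<Sum>k<n. lam^k * w (v + int k) a b e)"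

lemma per_avg: "per n w \<Longrightarrow> per n (avg lam n w)"
  unfolding per_def avg_def
proof (intro allI ext)
  fix v a b e assume p: "\<forall>v. w v = w (v mod int n)"
  have "w (v mod int n + int k) = w (v + int k)" for k
    using p by (metis mod_add_left_eq)
  then show "(\<Sum>k<n. lam ^ k * w (v + int k) a b e) = (\<Sum>k<n. lam ^ k * w (v mod int n + int k) a b e)"
    by simp
qed

lemma avg_shift:
  assumes p: "per n w" and l: "lam^n = 1" and n: "0 < n"
  shows "avg lam n w (v - 1) a b e = lam * avg lam n w v a b e"
proof -
  obtain n' where n': "n = Suc n'" using n by (cases n) auto
  have wn: "w (v - 1) = w (v + int n')"
  proof -
    have "w (v - 1) = w ((v - 1) mod int n)" using p unfolding per_def by metis
    also have "(v - 1) mod int n = (v + int n') mod int n"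
    proof -
      have e: "v + int n' = (v - 1) + int n" using n' by simp
      show ?thesis unfolding e by (rule mod_add_self2[symmetric])
    qed
    also have "w ((v + int n') mod int n) = w (v + int n')" using p unfolding per_def by metis
    finally show ?thesis .
  qed
  have "avg lam n w (v - 1) a b e = (\<Sum>k<Suc n'. lam^k * w (v - 1 + int k) a b e)"
    unfolding avg_def n' ..
  also have "\<dots> = w (v - 1) a b e + (\<Sum>k<n'. lam^(Suc k) * w (v + int k) a b e)"
    by (subst sum.lessThan_Suc_shift) simp
  also have "\<dots> = (\<Sum>k<n'. lam^(Suc k) * w (v + int k) a b e) + lam^(Suc n') * w (v + int n') a b e"
    using wn l n' by simp
  also have "\<dots> = (\<Sum>k<Suc n'. lam^(Suc k) * w (v + int k) a b e)" by simp
  also have "\<dots> = lam * avg lam n w v a b e"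
    unfolding avg_def n' by (simp add: sum_distrib_left mult.assoc distrib_left)
  finally show ?thesis .
qed

lemma Dc_zero: "Dc (\<lambda>v a b e. 0) = (\<lambda>v a b e. (0::'k::field))"
  by (intro ext) (simp add: Dc_def)

lemma Dc_sum: "Dc (\<lambda>v a b e. \<Sum>k<(N::nat). f k v a b e) = (\<lambda>v a b e. \<Sum>k<N. Dc (f k) v a b e)"
proof (induction N)
  case 0 then show ?case by (simp add: Dc_zero)
next
  case (Suc N)
  have "Dc (\<lambda>v a b e. \<Sum>k<Suc N. f k v a b e) = Dc (\<lambda>v a b e. (\<Sum>k<N. f k v a b e) + f N v a b e)"
    by simp
  also have "\<dots> = (\<lambda>v a b e. Dc (\<lambda>v a b e. \<Sum>k<N. f k v a b e) v a b e + Dc (f N) v a b e)"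
    by (rule Dc_add)
  also have "\<dots> = (\<lambda>v a b e. \<Sum>k<Suc N. Dc (f k) v a b e)" unfolding Suc by simp
  finally show ?case .
qed

lemma Dc_shift: "Dc (\<lambda>v. f (v + t)) v a b e = Dc f (v + t) a b e"
proof -
  have e: "v - 1 + t = v + t - 1" "v - 2 + t = v + t - 2" "v - 4 + t = v + t - 4" by simp_all
  show ?thesis by (simp only: Dc_def e)
qed

lemma Dc_avg: "Dc (avg lam n w) = avg lam n (Dc w)"
proof (intro ext)
  fix v a b e
  have "Dc (avg lam n w) = Dc (\<lambda>v a b e. \<Sum>k<n. lam^k * w (v + int k) a b e)"
    unfolding avg_def ..
  also have "\<dots> = (\<lambda>v a b e. \<Sum>k<n. Dc (\<lambda>v a b e. lam^k * w (v + int k) a b e) v a b e)"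
    by (rule Dc_sum)
  finally have "Dc (avg lam n w) v a b e = (\<Sum>k<n. Dc (\<lambda>v a b e. lam^k * w (v + int k) a b e) v a b e)"
    by simp
  also have "\<dots> = (\<Sum>k<n. lam^k * Dc w (v + int k) a b e)"
  proof (rule sum.cong[OF refl])
    fix k
    have "Dc (\<lambda>v a b e. lam^k * w (v + int k) a b e) v a b e = lam^k * Dc (\<lambda>v. w (v + int k)) v a b e"
      using Dc_smult[of "lam^k" "\<lambda>v. w (v + int k)"] by metis
    also have "\<dots> = lam^k * Dc w (v + int k) a b e" by (simp only: Dc_shift)
    finally show "Dc (\<lambda>v a b e. lam^k * w (v + int k) a b e) v a b e = lam^k * Dc w (v + int k) a b e" .
  qed
  also have "\<dots> = avg lam n (Dc w) v a b e" unfolding avg_def ..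
  finally show "Dc (avg lam n w) v a b e = avg lam n (Dc w) v a b e" .
qed

lemma eig_pow:
  assumes e: "eig lam m c" and cl: "cell m a b e"
  shows "lam^k * c (v + int k) a b e = c v a b e"
proof (induction k)
  case 0 then show ?case by simp
next
  case (Suc k)
  have "c (v + int (Suc k) - 1) a b e = lam * c (v + int (Suc k)) a b e"
    using e cl unfolding eig_def by blast
  then have h: "c (v + int k) a b e = lam * c (v + int (Suc k)) a b e" by simp
  have "lam^(Suc k) * c (v + int (Suc k)) a b e = lam^k * (lam * c (v + int (Suc k)) a b e)"
    by (simp only: power_Suc mult.assoc mult.commute[of lam])
  also have "\<dots> = lam^k * c (v + int k) a b e" using h by simp
  also have "\<dots> = c v a b e" using Suc.IH .
  finally show ?case .
qed

lemma avg_eig: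
  assumes e: "eig lam m c" and cl: "cell m a b e"
  shows "avg lam n c v a b e = of_nat n * c v a b e"
  unfolding avg_def using eig_pow[OF e cl] by simp

lemma avg_ceq: "ceq m c d \<Longrightarrow> ceq m (avg lam n c) (avg lam n d)"
  unfolding ceq_def avg_def by simp

lemma geom0:
  assumes "lam^n = 1" "lam \<noteq> (1::'k::field)"
  shows "(\<Sum>k<n. lam^k) = 0"
  using assms by (simp add: sum_gp_strict)

lemma bd0: "u \<in> chains n 0 \<Longrightarrow> bd n u = (\<lambda>_. 0)"
proof
  fix ys assume u: "u \<in> chains n 0"
  show "bd n u ys = 0"
  proof (cases "ys \<noteq> [] \<and> regular_path ys \<and> set ys \<subseteq> {..<n}")
    case True
    have "\<forall>xs\<in>vpaths n (Suc (length ys)). u xs = 0"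
      using u True unfolding chains_def vpaths_def by auto
    then show ?thesis unfolding bd_def by (auto intro!: sum.neutral)
  next
    case False then show ?thesis unfolding bd_def by auto
  qed
qed

lemma Omega0_chains: "u \<in> Omega n S 0 \<Longrightarrow> u \<in> chains n 0"
  unfolding Omega_def Apaths_def by auto

lemma per_shift1: "per n c \<Longrightarrow> per n (\<lambda>v. c (v - 1))"
  unfolding per_def by (metis mod_diff_left_eq)

lemma per_smult: "per n c \<Longrightarrow> per n (\<lambda>v a b e. k * c v a b e)"
  unfolding per_def by metis

lemma Oe_char:
  assumes n: "10 < n"
  shows "u \<in> Omega_eig n S0 lam m \<longleftrightarrow> (\<exists>c. per n c \<and> eig lam m c \<and> u = Phi n m c)"
proof
  assume "u \<in> Omega_eig n S0 lam m"
  then have u: "u \<in> Omega n S0 m" "tau n u = (\<lambda>xs. lam * u xs)" unfolding Omega_eig_def by auto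
  obtain c where c: "per n c" "u = Phi n m c" using u(1) Omega_char[OF n] by blast
  have "Phi n m (\<lambda>v. c (v - 1)) = Phi n m (\<lambda>v a b e. lam * c v a b e)"
    using u(2) unfolding c(2) tau_Phi[OF n c(1)] Phi_smult by simp
  then have "eig lam m c"
    using Phi_eq_iff[OF n per_shift1[OF c(1)] per_smult[OF c(1)]] unfolding eig_def by simp
  then show "\<exists>c. per n c \<and> eig lam m c \<and> u = Phi n m c" using c by blast
next
  assume "\<exists>c. per n c \<and> eig lam m c \<and> u = Phi n m c"
  then obtain c where c: "per n c" "eig lam m c" "u = Phi n m c" by blast
  have "tau n u = (\<lambda>xs. lam * u xs)"
    unfolding c(3) tau_Phi[OF n c(1)] Phi_smult[symmetric]
    using Phi_eq_iff[OF n per_shift1[OF c(1)] per_smult[OF c(1)]] c(2) unfolding eig_def by simp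
  then show "u \<in> Omega_eig n S0 lam m" unfolding Omega_eig_def using Phi_Omega[OF n] c(3) by simp
qed

lemma bnd_of:
  assumes n: "10 < n" and p: "per n c" "per n w" and ce: "ceq m c (Dc w)"
  shows "Phi n m c = bd n (Phi n (Suc m) w)"
  unfolding bd_Phi[OF n p(2)]
  using Phi_eq_iff[OF n p(1) per_Dc[OF p(2)]] ce unfolding ceq_def by simp

lemma cyc_of:
  fixes c :: "('k::field) coef"
  assumes n: "10 < n" and p: "per n c" and z: "bd n (Phi n (Suc m) c) = (\<lambda>_. 0)"
  shows "ceq m (Dc c) (\<lambda>v a b e. 0)"
proof -
  have "Phi n m (Dc c) = Phi n m (\<lambda>v a b e. 0)" using z bd_Phi[OF n p, of m] Phi_zero[where 'a='k, of n m] by simp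
  then show ?thesis using Phi_eq_iff[OF n per_Dc[OF p]] unfolding ceq_def per_def by auto
qed

lemma full_ge2:
  assumes n: "10 < n" and m: "2 \<le> m"
  shows "homology_zero n (Omega n S0 :: nat \<Rightarrow> ('k::field) chain set) m"
  unfolding homology_zero_def cycles_def boundaries_def
proof
  fix u :: "'k chain" assume "u \<in> {u \<in> Omega n S0 m. bd n u = (\<lambda>_. 0)}"
  then have u: "u \<in> Omega n S0 m" "bd n u = (\<lambda>_. 0)" by auto
  obtain c where c: "per n c" "u = Phi n m c" using u(1) Omega_char[OF n] by blast
  have mm: "m = Suc (m - 1)" using m by simp
  have "ceq (m-1) (Dc c) (\<lambda>v a b e. 0)"
    by (rule cyc_of[OF n c(1)]) (use u(2) c(2) mm in metis)
  then obtain w where w: "per n w" "ceq m c (Dc w)" using K2[OF m c(1)] by blast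
  have "u = bd n (Phi n (Suc m) w)" using bnd_of[OF n c(1) w(1) w(2)] c(2) by simp
  moreover have "Phi n (Suc m) w \<in> Omega n S0 (Suc m)" by (rule Phi_Omega[OF n])
  ultimately show "u \<in> bd n ` Omega n S0 (Suc m)" by blast
qed

lemma EBgen:
  fixes c w :: "('k::field_char_0) coef"
  assumes n: "10 < n" and l: "lam^n = 1" and pc: "per n c" and pw: "per n w"
    and h: "\<And>v a b e. cell m a b e \<Longrightarrow> of_nat n * c v a b e = avg lam n (Dc w) v a b e"
  shows "\<exists>w'. per n w' \<and> eig lam (Suc m) w' \<and> ceq m c (Dc w')"
proof -
  have n0: "0 < n" using n by simp
  define w' where "w' = (\<lambda>v a b e. (1 / of_nat n) * avg lam n w v a b e)"
  have p': "per n w'" unfolding w'_def by (rule per_smult[OF per_avg[OF pw]])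
  have e': "eig lam (Suc m) w'" unfolding eig_def w'_def using avg_shift[OF pw l n0] by simp
  have "ceq m c (Dc w')"
    unfolding ceq_def
  proof (intro allI impI)
    fix v a b e assume cl: "cell m a b e"
    have "Dc w' v a b e = (1 / of_nat n) * avg lam n (Dc w) v a b e"
      unfolding w'_def Dc_smult Dc_avg ..
    also have "\<dots> = (1 / of_nat n) * (of_nat n * c v a b e)" using h[OF cl] by simp
    also have "\<dots> = c v a b e" using n0 by simp
    finally show "c v a b e = Dc w' v a b e" by simp
  qed
  then show ?thesis using p' e' by blast
qed

lemma EB:
  fixes c w :: "('k::field_char_0) coef"
  assumes n: "10 < n" and l: "lam^n = 1" and pc: "per n c" and ec: "eig lam m c" and pw: "per n w"
    and ce: "ceq m c (Dc w)"
  shows "\<exists>w'. per n w' \<and> eig lam (Suc m) w' \<and> ceq m c (Dc w')"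
proof (rule EBgen[OF n l pc pw])
  fix v a b e assume cl: "cell m a b e"
  have "avg lam n c v a b e = avg lam n (Dc w) v a b e"
    using avg_ceq[OF ce] cl unfolding ceq_def by blast
  then show "of_nat n * c v a b e = avg lam n (Dc w) v a b e" using avg_eig[OF ec cl] by simp
qed

lemma eig_ge2:
  assumes n: "10 < n" and m: "2 \<le> m" and l: "lam^n = 1"
  shows "homology_zero n (Omega_eig n S0 (lam::'k::field_char_0)) m"
  unfolding homology_zero_def cycles_def boundaries_def
proof
  fix u :: "'k chain" assume "u \<in> {u \<in> Omega_eig n S0 lam m. bd n u = (\<lambda>_. 0)}"
  then have u: "u \<in> Omega_eig n S0 lam m" "bd n u = (\<lambda>_. 0)" by auto
  obtain c where c: "per n c" "eig lam m c" "u = Phi n m c" using u(1) Oe_char[OF n] by blast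
  have mm: "m = Suc (m - 1)" using m by simp
  have "ceq (m-1) (Dc c) (\<lambda>v a b e. 0)"
    by (rule cyc_of[OF n c(1)]) (use u(2) c(3) mm in metis)
  then obtain w where w: "per n w" "ceq m c (Dc w)" using K2[OF m c(1)] by blast
  obtain w' where w': "per n w'" "eig lam (Suc m) w'" "ceq m c (Dc w')"
    using EB[OF n l c(1) c(2) w] by blast
  have "u = bd n (Phi n (Suc m) w')" using bnd_of[OF n c(1) w'(1) w'(3)] c(3) by simp
  moreover have "Phi n (Suc m) w' \<in> Omega_eig n S0 lam (Suc m)" using Oe_char[OF n] w' by blast
  ultimately show "u \<in> bd n ` Omega_eig n S0 lam (Suc m)" by blast
qed

lemma Dc_z1c_0: "Dc z1c v 0 0 0 = 0"
  by (simp add: Dc_def z1c_def)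

lemma eig_z1c: "eig 1 m z1c" unfolding eig_def z1c_def by simp

lemma z1c_cycle:
  assumes n: "10 < n"
  shows "bd n (Phi n 1 (z1c::('k::field) coef)) = (\<lambda>_. 0)"
proof -
  have "bd n (Phi n (Suc 0) (z1c::'k coef)) = Phi n 0 (Dc z1c)" by (rule bd_Phi[OF n per_z1c])
  also have "\<dots> = Phi n 0 (\<lambda>v a b e. 0)"
    by (rule Phi_cong) (use n Dc_z1c_0 in \<open>auto simp: cell_def\<close>)
  also have "\<dots> = (\<lambda>_. 0)" by (rule Phi_zero)
  finally show ?thesis by simp
qed

lemma z1c_not_bd:
  assumes n: "10 < n" and pw: "per n w" and ce: "ceq 1 (z1c::('k::field_char_0) coef) (Dc w)"
  shows False
proof -
  have n0: "0 < n" using n by simp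
  have "(\<Sum>k<n. Dc w (int k) 1 0 0 + 2 * Dc w (int k) 0 1 0 + 4 * Dc w (int k) 0 0 1) = 0"
    by (rule N1[OF pw n0])
  moreover have "Dc w (int k) 1 0 0 = 1" "Dc w (int k) 0 1 0 = 0" "Dc w (int k) 0 0 1 = 0" for k
    using ce unfolding ceq_def cell_def z1c_def by (metis add.right_neutral add_0 le_numeral_extra(4) le_refl
        one_neq_zero zero_le_one)+
  ultimately have "(of_nat n :: 'k) = 0" by simp
  then show False using n0 by simp
qed

lemma full1:
  assumes n: "10 < n"
  shows "homology_iso_field n (Omega n S0 :: nat \<Rightarrow> ('k::field_char_0) chain set) 1"
  unfolding homology_iso_field_def
proof (intro bexI conjI ballI)
  let ?z = "Phi n 1 (z1c::'k coef)"
  show zc: "?z \<in> cycles n (Omega n S0) 1"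
    unfolding cycles_def using Phi_Omega[OF n, of 1 "z1c::'k coef"] z1c_cycle[OF n, where 'k='k] by simp
  show "?z \<notin> boundaries n (Omega n S0) 1"
  proof
    assume "?z \<in> boundaries n (Omega n S0) 1"
    then obtain x where x: "x \<in> Omega n S0 (Suc 1)" "?z = bd n x" unfolding boundaries_def by blast
    obtain w where w: "per n w" "x = Phi n (Suc 1) w" using x(1) Omega_char[OF n] by blast
    have "?z = Phi n 1 (Dc w)" using x(2) w(2) bd_Phi[OF n w(1), of 1] by simp
    then have "ceq 1 z1c (Dc w)" using Phi_eq_iff[OF n per_z1c per_Dc[OF w(1)]] unfolding ceq_def by simp
    then show False using z1c_not_bd[OF n w(1)] by blast
  qed
  fix u :: "'k chain" assume "u \<in> cycles n (Omega n S0) 1"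
  then have u: "u \<in> Omega n S0 1" "bd n u = (\<lambda>_. 0)" unfolding cycles_def by auto
  obtain c where c: "per n c" "u = Phi n 1 c" using u(1) Omega_char[OF n] by blast
  have "ceq 0 (Dc c) (\<lambda>v a b e. 0)" by (rule cyc_of[OF n c(1)]) (use u(2) c(2) in simp)
  then have "\<forall>v. Dc c v 0 0 0 = 0" unfolding ceq_def cell_def by simp
  then obtain w k where w: "per n w" "ceq 1 c (\<lambda>v a b e. k * z1c v a b e + Dc w v a b e)"
    using K1[of n c] n c(1) by auto
  have ce: "ceq 1 (\<lambda>v a b e. c v a b e - k * z1c v a b e) (Dc w)" using w(2) unfolding ceq_def by simp
  have pc': "per n (\<lambda>v a b e. c v a b e - k * z1c v a b e)"
    by (rule per_diff[OF c(1) per_smult[OF per_z1c]])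
  have "(\<lambda>xs. u xs - k * ?z xs) = Phi n 1 (\<lambda>v a b e. c v a b e - k * z1c v a b e)"
    unfolding c(2) Phi_lin ..
  also have "\<dots> = bd n (Phi n (Suc 1) w)" by (rule bnd_of[OF n pc' w(1) ce])
  finally have "(\<lambda>xs. u xs - k * ?z xs) = bd n (Phi n 2 w)" by (simp add: numeral_2_eq_2)
  moreover have "Phi n 2 w \<in> Omega n S0 (Suc 1)" using Phi_Omega[OF n] by (simp add: numeral_2_eq_2)
  ultimately show "\<exists>k. (\<lambda>xs. u xs - k * ?z xs) \<in> boundaries n (Omega n S0) 1"
    unfolding boundaries_def by auto
qed

lemma sum_z0c: "0 < n \<Longrightarrow> (\<Sum>k<n. z0c n (int k) 0 0 0) = (1::'k::field)"
proof -
  assume n: "0 < n"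
  have "(\<Sum>k<n. z0c n (int k) 0 0 0) = (\<Sum>k<n. if k = 0 then (1::'k) else 0)"
  proof (rule sum.cong[OF refl])
    fix k assume "k \<in> {..<n}"
    then have "int k mod int n = int k" by simp
    then show "z0c n (int k) 0 0 0 = (if k = 0 then 1 else 0)" unfolding z0c_def by simp
  qed
  also have "\<dots> = 1" using n by simp
  finally show ?thesis .
qed

lemma cycles0: "cycles n Om 0 = Om 0" if "\<And>u. u \<in> Om 0 \<Longrightarrow> u \<in> chains n 0"
  unfolding cycles_def using bd0 that by auto

lemma full0:
  assumes n: "10 < n"
  shows "homology_iso_field n (Omega n S0 :: nat \<Rightarrow> ('k::field_char_0) chain set) 0"
  unfolding homology_iso_field_def
proof (intro bexI conjI ballI)
  have n0: "0 < n" using n by simp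
  let ?z = "Phi n 0 (z0c n::'k coef)"
  have cy: "cycles n (Omega n S0 :: nat \<Rightarrow> 'k chain set) 0 = Omega n S0 0"
    by (rule cycles0) (rule Omega0_chains)
  show "?z \<in> cycles n (Omega n S0) 0" unfolding cy using Phi_Omega[OF n] by blast
  show "?z \<notin> boundaries n (Omega n S0) 0"
  proof
    assume "?z \<in> boundaries n (Omega n S0) 0"
    then obtain x where x: "x \<in> Omega n S0 (Suc 0)" "?z = bd n x" unfolding boundaries_def by blast
    obtain w where w: "per n w" "x = Phi n (Suc 0) w" using x(1) Omega_char[OF n] by blast
    have "?z = Phi n 0 (Dc w)" using x(2) w(2) bd_Phi[OF n w(1), of 0] by simp
    then have "\<forall>v. z0c n v 0 0 0 = Dc w v 0 0 0"
      using Phi_eq_iff[OF n per_z0c per_Dc[OF w(1)]] unfolding cell_def by simp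
    then have eqs: "(\<Sum>k<n. z0c n (int k) 0 0 0) = (\<Sum>k<n. Dc w (int k) 0 0 0)" by simp
    have s1: "(\<Sum>k<n. z0c n (int k) 0 0 0) = (1::'k)" by (rule sum_z0c[OF n0])
    have s2: "(\<Sum>k<n. Dc w (int k) 0 0 0) = (0::'k)" by (rule N0[OF w(1) n0])
    have "(1::'k) = 0" using eqs unfolding s1 s2 .
    then show False by simp
  qed
  fix u :: "'k chain" assume "u \<in> cycles n (Omega n S0) 0"
  then have u: "u \<in> Omega n S0 0" unfolding cy .
  obtain c where c: "per n c" "u = Phi n 0 c" using u Omega_char[OF n] by blast
  obtain w where w: "per n w" "\<forall>v. c v 0 0 0 = (\<Sum>k<n. c (int k) 0 0 0) * z0c n v 0 0 0 + Dc w v 0 0 0"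
    using K0[OF n0 c(1)] by blast
  define k where "k = (\<Sum>k<n. c (int k) 0 0 0)"
  have ce: "ceq 0 (\<lambda>v a b e. c v a b e - k * z0c n v a b e) (Dc w)"
    unfolding ceq_def
  proof (intro allI impI)
    fix v a b e assume "cell 0 a b e"
    then have abe: "a = 0" "b = 0" "e = 0" unfolding cell_def by auto
    have h: "c v 0 0 0 = k * z0c n v 0 0 0 + Dc w v 0 0 0" using w(2)[rule_format, of v, folded k_def] .
    show "c v a b e - k * z0c n v a b e = Dc w v a b e" unfolding abe h by simp
  qed
  have pc': "per n (\<lambda>v a b e. c v a b e - k * z0c n v a b e)"
    by (rule per_diff[OF c(1) per_smult[OF per_z0c]])
  have "(\<lambda>xs. u xs - k * ?z xs) = Phi n 0 (\<lambda>v a b e. c v a b e - k * z0c n v a b e)"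
    unfolding c(2) Phi_lin ..
  also have "\<dots> = bd n (Phi n (Suc 0) w)" by (rule bnd_of[OF n pc' w(1) ce])
  finally have "(\<lambda>xs. u xs - k * ?z xs) = bd n (Phi n (Suc 0) w)" .
  moreover have "Phi n (Suc 0) w \<in> Omega n S0 (Suc 0)" using Phi_Omega[OF n] by simp
  ultimately show "\<exists>k. (\<lambda>xs. u xs - k * ?z xs) \<in> boundaries n (Omega n S0) 0"
    unfolding boundaries_def by auto
qed

definition onec :: "('k::field) coef" where "onec v a b e = 1"

lemma per_onec: "per n onec" unfolding per_def onec_def by simp
lemma eig_onec: "eig 1 m onec" unfolding eig_def onec_def by simp

lemma Oe_sub: "Omega_eig n S lam m \<subseteq> Omega n S m" unfolding Omega_eig_def by auto

lemma cyclesOe0: "cycles n (Omega_eig n S lam) 0 = Omega_eig n S lam 0"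
  by (rule cycles0) (use Oe_sub Omega0_chains in blast)

lemma sum_z0c_shift: "0 < n \<Longrightarrow> (\<Sum>k<n. z0c n (v + int k) 0 0 0) = (1::'k::field)"
proof -
  assume n: "0 < n"
  have "\<forall>x. (\<lambda>x. z0c n x 0 0 0 :: 'k) x = (\<lambda>x. z0c n x 0 0 0) (x mod int n)" unfolding z0c_def by simp
  from sum_shift[OF this n, of v] have "(\<Sum>k<n. z0c n (int k + v) 0 0 0) = (\<Sum>k<n. (z0c n (int k) 0 0 0 :: 'k))" .
  then show ?thesis using sum_z0c[OF n] by (simp add: add.commute)
qed

lemma eig1_0:
  assumes n: "10 < n"
  shows "homology_iso_field n (Omega_eig n S0 (1::'k::field_char_0)) 0"
  unfolding homology_iso_field_def cyclesOe0
proof (intro bexI conjI ballI)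
  have n0: "0 < n" using n by simp
  let ?z = "Phi n 0 (onec::'k coef)"
  show "?z \<in> Omega_eig n S0 1 0" using Oe_char[OF n] per_onec eig_onec by blast
  show "?z \<notin> boundaries n (Omega_eig n S0 1) 0"
  proof
    assume "?z \<in> boundaries n (Omega_eig n S0 1) 0"
    then obtain x where x: "x \<in> Omega_eig n S0 1 (Suc 0)" "?z = bd n x" unfolding boundaries_def by blast
    obtain w where w: "per n w" "x = Phi n (Suc 0) w" using x(1) Oe_char[OF n] by blast
    have "?z = Phi n 0 (Dc w)" using x(2) w(2) bd_Phi[OF n w(1), of 0] by simp
    then have "\<forall>v. onec v 0 0 0 = Dc w v 0 0 0"
      using Phi_eq_iff[OF n per_onec per_Dc[OF w(1)]] unfolding cell_def by simp
    then have eqs: "(\<Sum>k<n. onec (int k) 0 0 0) = (\<Sum>k<n. Dc w (int k) 0 0 0)" by simp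
    have s1: "(\<Sum>k<n. onec (int k) 0 0 0) = (of_nat n::'k)" unfolding onec_def by simp
    have s2: "(\<Sum>k<n. Dc w (int k) 0 0 0) = (0::'k)" by (rule N0[OF w(1) n0])
    have "(of_nat n::'k) = 0" using eqs unfolding s1 s2 .
    then show False using n0 by simp
  qed
  fix u :: "'k chain" assume u: "u \<in> Omega_eig n S0 1 0"
  obtain c where c: "per n c" "eig 1 0 c" "u = Phi n 0 c" using u Oe_char[OF n] by blast
  obtain w where w: "per n w" "\<forall>v. c v 0 0 0 = (\<Sum>k<n. c (int k) 0 0 0) * z0c n v 0 0 0 + Dc w v 0 0 0"
    using K0[OF n0 c(1)] by blast
  define k where "k = (\<Sum>k<n. c (int k) 0 0 0)"
  define c' where "c' = (\<lambda>v a b e. c v a b e - (k / of_nat n) * onec v a b e)"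
  have pc': "per n c'" unfolding c'_def by (rule per_diff[OF c(1) per_smult[OF per_onec]])
  have h: "of_nat n * c' v a b e = avg 1 n (Dc w) v a b e" if "cell 0 a b e" for v a b e
  proof -
    have abe: "a = 0" "b = 0" "e = 0" using that unfolding cell_def by auto
    have hw: "Dc w x 0 0 0 = c x 0 0 0 - k * z0c n x 0 0 0" for x
      using w(2)[rule_format, of x, folded k_def] by simp
    have "avg 1 n (Dc w) v 0 0 0 = (\<Sum>j<n. c (v + int j) 0 0 0 - k * z0c n (v + int j) 0 0 0)"
      unfolding avg_def hw by simp
    also have "\<dots> = (\<Sum>j<n. c (v + int j) 0 0 0) - k * (\<Sum>j<n. z0c n (v + int j) 0 0 0)"
      by (simp add: sum_subtractf sum_distrib_left)
    also have "(\<Sum>j<n. c (v + int j) 0 0 0) = avg 1 n c v 0 0 0" unfolding avg_def by simp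
    also have "\<dots> = of_nat n * c v 0 0 0" by (rule avg_eig[OF c(2)]) (simp add: cell_def)
    also have "(\<Sum>j<n. z0c n (v + int j) 0 0 0) = (1::'k)" by (rule sum_z0c_shift[OF n0])
    finally have "avg 1 n (Dc w) v 0 0 0 = of_nat n * c v 0 0 0 - k" by simp
    moreover have "of_nat n * c' v 0 0 0 = of_nat n * c v 0 0 0 - k"
      unfolding c'_def onec_def using n0 by (simp add: algebra_simps)
    ultimately show ?thesis unfolding abe by simp
  qed
  obtain w' where w': "per n w'" "eig 1 (Suc 0) w'" "ceq 0 c' (Dc w')"
    using EBgen[OF n _ pc' w(1) h] by auto
  have "(\<lambda>xs. u xs - (k / of_nat n) * ?z xs) = Phi n 0 c'"
    unfolding c(3) c'_def Phi_lin ..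
  also have "\<dots> = bd n (Phi n (Suc 0) w')" by (rule bnd_of[OF n pc' w'(1) w'(3)])
  finally have "(\<lambda>xs. u xs - (k / of_nat n) * ?z xs) = bd n (Phi n (Suc 0) w')" .
  moreover have "Phi n (Suc 0) w' \<in> Omega_eig n S0 1 (Suc 0)" using Oe_char[OF n] w' by blast
  ultimately have "(\<lambda>xs. u xs - (k / of_nat n) * ?z xs) \<in> boundaries n (Omega_eig n S0 1) 0"
    unfolding boundaries_def by (metis image_eqI)
  then show "\<exists>k. (\<lambda>xs. u xs - k * ?z xs) \<in> boundaries n (Omega_eig n S0 1) 0" by blast
qed

lemma eig1_1:
  assumes n: "10 < n"
  shows "homology_iso_field n (Omega_eig n S0 (1::'k::field_char_0)) 1"
  unfolding homology_iso_field_def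
proof (intro bexI conjI ballI)
  let ?z = "Phi n 1 (z1c::'k coef)"
  have zO: "?z \<in> Omega_eig n S0 1 1" using Oe_char[OF n] per_z1c eig_z1c by blast
  show "?z \<in> cycles n (Omega_eig n S0 1) 1"
    unfolding cycles_def using zO z1c_cycle[OF n, where 'k='k] by simp
  show "?z \<notin> boundaries n (Omega_eig n S0 1) 1"
  proof
    assume "?z \<in> boundaries n (Omega_eig n S0 1) 1"
    then obtain x where x: "x \<in> Omega_eig n S0 1 (Suc 1)" "?z = bd n x" unfolding boundaries_def by blast
    obtain w where w: "per n w" "x = Phi n (Suc 1) w" using x(1) Oe_char[OF n] by blast
    have "?z = Phi n 1 (Dc w)" using x(2) w(2) bd_Phi[OF n w(1), of 1] by simp
    then have "ceq 1 z1c (Dc w)" using Phi_eq_iff[OF n per_z1c per_Dc[OF w(1)]] unfolding ceq_def by simp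
    then show False using z1c_not_bd[OF n w(1)] by blast
  qed
  fix u :: "'k chain" assume "u \<in> cycles n (Omega_eig n S0 1) 1"
  then have u: "u \<in> Omega_eig n S0 1 1" "bd n u = (\<lambda>_. 0)" unfolding cycles_def by auto
  obtain c where c: "per n c" "eig 1 1 c" "u = Phi n 1 c" using u(1) Oe_char[OF n] by blast
  have "ceq 0 (Dc c) (\<lambda>v a b e. 0)" by (rule cyc_of[OF n c(1)]) (use u(2) c(3) in simp)
  then have "\<forall>v. Dc c v 0 0 0 = 0" unfolding ceq_def cell_def by simp
  then obtain w k where w: "per n w" "ceq 1 c (\<lambda>v a b e. k * z1c v a b e + Dc w v a b e)"
    using K1[of n c] n c(1) by auto
  define c' where "c' = (\<lambda>v a b e. c v a b e - k * z1c v a b e)"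
  have ce: "ceq 1 c' (Dc w)" using w(2) unfolding ceq_def c'_def by simp
  have pc': "per n c'" unfolding c'_def by (rule per_diff[OF c(1) per_smult[OF per_z1c]])
  have ec': "eig 1 1 c'" using c(2) unfolding eig_def c'_def z1c_def by simp
  obtain w' where w': "per n w'" "eig 1 (Suc 1) w'" "ceq 1 c' (Dc w')"
    using EB[OF n _ pc' ec' w(1) ce] by auto
  have "(\<lambda>xs. u xs - k * ?z xs) = Phi n 1 c'"
    unfolding c(3) c'_def Phi_lin ..
  also have "\<dots> = bd n (Phi n (Suc 1) w')" by (rule bnd_of[OF n pc' w'(1) w'(3)])
  finally have "(\<lambda>xs. u xs - k * ?z xs) = bd n (Phi n (Suc 1) w')" .
  moreover have "Phi n (Suc 1) w' \<in> Omega_eig n S0 1 (Suc 1)" using Oe_char[OF n] w' by blast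
  ultimately show "\<exists>k. (\<lambda>xs. u xs - k * ?z xs) \<in> boundaries n (Omega_eig n S0 1) 1"
    unfolding boundaries_def by auto
qed

lemma eigne_0:
  assumes n: "10 < n" and l: "lam^n = 1" "lam \<noteq> (1::'k::field_char_0)"
  shows "homology_zero n (Omega_eig n S0 lam) 0"
  unfolding homology_zero_def cyclesOe0 boundaries_def
proof
  have n0: "0 < n" using n by simp
  fix u :: "'k chain" assume u: "u \<in> Omega_eig n S0 lam 0"
  obtain c where c: "per n c" "eig lam 0 c" "u = Phi n 0 c" using u Oe_char[OF n] by blast
  have sh: "c (v - 1) 0 0 0 = lam * c v 0 0 0" for v using c(2) unfolding eig_def cell_def by simp
  have "(\<Sum>k<n. c (int k - 1) 0 0 0) = (\<Sum>k<n. c (int k) 0 0 0)" by (rule sum_shift_per[OF c(1) n0])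
  then have "lam * (\<Sum>k<n. c (int k) 0 0 0) = (\<Sum>k<n. c (int k) 0 0 0)"
    unfolding sh by (simp add: sum_distrib_left)
  then have s0: "(\<Sum>k<n. c (int k) 0 0 0) = 0" using l(2)
    by (metis lambda_one mult_cancel_right)
  obtain w where w: "per n w" "\<forall>v. c v 0 0 0 = (\<Sum>k<n. c (int k) 0 0 0) * z0c n v 0 0 0 + Dc w v 0 0 0"
    using K0[OF n0 c(1)] by blast
  have ce: "ceq 0 c (Dc w)"
    unfolding ceq_def
  proof (intro allI impI)
    fix v a b e assume "cell 0 a b e"
    then have abe: "a = 0" "b = 0" "e = 0" unfolding cell_def by auto
    have "c v 0 0 0 = Dc w v 0 0 0" using w(2)[rule_format, of v] unfolding s0 by simp
    then show "c v a b e = Dc w v a b e" unfolding abe .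
  qed
  obtain w' where w': "per n w'" "eig lam (Suc 0) w'" "ceq 0 c (Dc w')"
    using EB[OF n l(1) c(1) c(2) w(1) ce] by auto
  have "u = bd n (Phi n (Suc 0) w')" unfolding c(3) by (rule bnd_of[OF n c(1) w'(1) w'(3)])
  moreover have "Phi n (Suc 0) w' \<in> Omega_eig n S0 lam (Suc 0)" using Oe_char[OF n] w' by blast
  ultimately show "u \<in> bd n ` Omega_eig n S0 lam (Suc 0)" by blast
qed

lemma eigne_1:
  assumes n: "10 < n" and l: "lam^n = 1" "lam \<noteq> (1::'k::field_char_0)"
  shows "homology_zero n (Omega_eig n S0 lam) 1"
  unfolding homology_zero_def cycles_def boundaries_def
proof
  have n0: "0 < n" using n by simp
  fix u :: "'k chain" assume "u \<in> {u \<in> Omega_eig n S0 lam 1. bd n u = (\<lambda>_. 0)}"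
  then have u: "u \<in> Omega_eig n S0 lam 1" "bd n u = (\<lambda>_. 0)" by auto
  obtain c where c: "per n c" "eig lam 1 c" "u = Phi n 1 c" using u(1) Oe_char[OF n] by blast
  have "ceq 0 (Dc c) (\<lambda>v a b e. 0)" by (rule cyc_of[OF n c(1)]) (use u(2) c(3) in simp)
  then have "\<forall>v. Dc c v 0 0 0 = 0" unfolding ceq_def cell_def by simp
  then obtain w k where w: "per n w" "ceq 1 c (\<lambda>v a b e. k * z1c v a b e + Dc w v a b e)"
    using K1[of n c] n c(1) by auto
  have h: "of_nat n * c v a b e = avg lam n (Dc w) v a b e" if cl: "cell 1 a b e" for v a b e
  proof -
    have "of_nat n * c v a b e = avg lam n c v a b e" using avg_eig[OF c(2) cl] by simp
    also have "\<dots> = (\<Sum>j<n. lam^j * (k * z1c (v + int j) a b e + Dc w (v + int j) a b e))"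
      unfolding avg_def using w(2) cl unfolding ceq_def by simp
    also have "\<dots> = k * z1c 0 a b e * (\<Sum>j<n. lam^j) + avg lam n (Dc w) v a b e"
      unfolding avg_def z1c_def by (simp add: algebra_simps sum.distrib sum_distrib_left)
    also have "\<dots> = avg lam n (Dc w) v a b e" using geom0[OF l] by simp
    finally show ?thesis .
  qed
  obtain w' where w': "per n w'" "eig lam (Suc 1) w'" "ceq 1 c (Dc w')"
    using EBgen[OF n l(1) c(1) w(1) h] by auto
  have "u = bd n (Phi n (Suc 1) w')" unfolding c(3) by (rule bnd_of[OF n c(1) w'(1) w'(3)])
  moreover have "Phi n (Suc 1) w' \<in> Omega_eig n S0 lam (Suc 1)" using Oe_char[OF n] w' by blast
  ultimately show "u \<in> bd n ` Omega_eig n S0 lam (Suc 1)" by blast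
qed

theorem mainTheorem15:
  fixes n :: nat
  assumes "n > 10"
    and roots: "\<exists>\<omega>::'k::field_char_0. \<omega> ^ n = 1 \<and> (\<forall>k. 0 < k \<and> k < n \<longrightarrow> \<omega> ^ k \<noteq> 1)"
  shows "(\<forall>lam::'k. lam ^ n = 1 \<longrightarrow>
            (if lam = 1
             then homology_iso_field n (Omega_eig n {1,2,4} lam) 0
                \<and> homology_iso_field n (Omega_eig n {1,2,4} lam) 1
             else homology_zero n (Omega_eig n {1,2,4} lam) 0
                \<and> homology_zero n (Omega_eig n {1,2,4} lam) 1)
            \<and> (\<forall>m\<ge>2. homology_zero n (Omega_eig n {1,2,4} lam) m))
       \<and> homology_iso_field n (Omega n {1,2,4} :: nat \<Rightarrow> 'k chain set) 0
       \<and> homology_iso_field n (Omega n {1,2,4} :: nat \<Rightarrow> 'k chain set) 1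
       \<and> (\<forall>m\<ge>2. homology_zero n (Omega n {1,2,4} :: nat \<Rightarrow> 'k chain set) m)"
proof -
  have n: "10 < n" using assms(1) by simp
  have A: "(if lam = 1
             then homology_iso_field n (Omega_eig n {1,2,4} lam) 0
                \<and> homology_iso_field n (Omega_eig n {1,2,4} lam) 1
             else homology_zero n (Omega_eig n {1,2,4} lam) 0
                \<and> homology_zero n (Omega_eig n {1,2,4} lam) 1)
            \<and> (\<forall>m\<ge>2. homology_zero n (Omega_eig n {1,2,4} lam) m)"
    if l: "lam ^ n = 1" for lam :: 'k
  proof (intro conjI allI impI)
    show "if lam = 1
             then homology_iso_field n (Omega_eig n {1,2,4} lam) 0
                \<and> homology_iso_field n (Omega_eig n {1,2,4} lam) 1
             else homology_zero n (Omega_eig n {1,2,4} lam) 0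
                \<and> homology_zero n (Omega_eig n {1,2,4} lam) 1"
    proof (cases "lam = 1")
      case True
      then show ?thesis using eig1_0[OF n, where 'k='k] eig1_1[OF n, where 'k='k] by simp
    next
      case False
      then show ?thesis using eigne_0[OF n l False] eigne_1[OF n l False] by simp
    qed
    fix m :: nat assume "2 \<le> m"
    then show "homology_zero n (Omega_eig n {1,2,4} lam) m" using eig_ge2[OF n _ l] by blast
  qed
  show ?thesis using A full0[OF n, where 'k='k] full1[OF n, where 'k='k] full_ge2[OF n, where 'k='k] by blast
qed

end
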